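(* Let $k\in\mathbb Z$, $\mathbb N_k=\{l\in\mathbb Z:l\le k\}$, and $\xi$ a random variable with $\mathbb P(\xi=l)=p_l$, $l\in\mathbb N_k$, $p_l\ge0$, $\sum_lp_l=1$, $p_k\in(0,1)$, $q_k=1-p_k$. For each $N$, let $Z$ be the Markov chain on $\Omega_k$ described in the context, $\bar\nu_N$ its invariant distribution and $\phi(m)=\sup\{i\in\mathbb N_k:m_i>0\}$. Then $$\lim_{N\to\infty}\frac{\bar\nu_N(\phi\le k-1)}{q_k^{N^2}2^N}=1.$$
   Context: $\Omega_k=\{m\in\{0,\dots,N\}^{\mathbb N_k}:\sum_{i\in\mathbb N_k}m_i=N\}$. The chain $Z$ on $\Omega_k$ has the kernel: from state $m$, take any $x\in\mathbb Z^N$ with exactly $m_l$ coordinates equal to $l$ for each $l\in\mathbb N_k$, let $\{\xi_{i,j}:1\le i,j\le N\}$ be fresh i.i.d. copies of $\xi$, and let the next state be $\big(\#\{i\le N:\max_j(x_j+\xi_{i,j})=\phi(m)+l\}\big)_{l\in\mathbb N_k}$. (Equivalently, $Z_l(t)=\#\{j:X_j(t)=\max_iX_i(t-1)+l\}$ for the particle system $X_i(t+1)=\max_j\{X_j(t)+\xi_{i,j}(t+1)\}$.) $\bar\nu_N$ is its unique invariant probability distribution. *)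

theory Defs
  imports "HOL-Probability.Probability"
begin

definition Omega :: "int \<Rightarrow> nat \<Rightarrow> (int \<Rightarrow> nat) set" where
  "Omega k N = {m. (\<forall>l. k < l \<longrightarrow> m l = 0) \<and> finite {l. m l \<noteq> 0}
                   \<and> (\<Sum>l\<in>{l. m l \<noteq> 0}. m l) = N}"

definition phi :: "int \<Rightarrow> (int \<Rightarrow> nat) \<Rightarrow> int" where
  "phi k m = Max {i. i \<le> k \<and> 0 < m i}"

text \<open>A particle configuration x in Z^N (coordinates j < N) with exactly m_l coordinates equal to l.\<close>
definition config :: "nat \<Rightarrow> (int \<Rightarrow> nat) \<Rightarrow> nat \<Rightarrow> int" where
  "config N m = (SOME x. \<forall>l. card {j. j < N \<and> x j = l} = m l)"

definition Zkernel :: "int pmf \<Rightarrow> int \<Rightarrow> nat \<Rightarrow> (int \<Rightarrow> nat) \<Rightarrow> (int \<Rightarrow> nat) pmf" where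
  "Zkernel p k N m =
     map_pmf (\<lambda>xi. \<lambda>l. if l \<le> k then
                 card {i. i < N \<and> Max {config N m j + xi (i, j) | j. j < N} = phi k m + l}
               else 0)
       (Pi_pmf ({0..<N} \<times> {0..<N}) 0 (\<lambda>_. p))"

definition invariant_Z :: "int pmf \<Rightarrow> int \<Rightarrow> nat \<Rightarrow> (int \<Rightarrow> nat) pmf \<Rightarrow> bool" where
  "invariant_Z p k N \<nu> \<longleftrightarrow> set_pmf \<nu> \<subseteq> Omega k N \<and> bind_pmf \<nu> (Zkernel p k N) = \<nu>"

end

theory Submission
  imports Defs
begin

lemma exp_bind_bounded:
  fixes f :: "'b \<Rightarrow> real"
  assumes "\<And>x. 0 \<le> f x" "\<And>x. f x \<le> B"
  shows "measure_pmf.expectation (bind_pmf M N) f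
       = measure_pmf.expectation M (\<lambda>x. measure_pmf.expectation (N x) f)"
proof -
  have int: "\<And>P. integrable (measure_pmf P) f"
    by (intro measure_pmf.integrable_const_bound[where B=B]) (use assms in auto)
  have "measure_pmf.expectation (bind_pmf M N) f = enn2real (\<integral>\<^sup>+x. ennreal (f x) \<partial>bind_pmf M N)"
    by (rule integral_eq_nn_integral) (use assms in auto)
  also have "(\<integral>\<^sup>+x. ennreal (f x) \<partial>bind_pmf M N) = (\<integral>\<^sup>+x. \<integral>\<^sup>+y. ennreal (f y) \<partial>N x \<partial>M)" by simp
  also have "\<dots> = (\<integral>\<^sup>+x. ennreal (measure_pmf.expectation (N x) f) \<partial>M)"
    by (intro nn_integral_cong nn_integral_eq_integral int) (use assms in auto)
  also have "enn2real \<dots> = measure_pmf.expectation M (\<lambda>x. measure_pmf.expectation (N x) f)"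
    by (rule integral_eq_nn_integral[symmetric]) (auto intro!: AE_pmfI Bochner_Integration.integral_nonneg simp: assms)
  finally show ?thesis .
qed

lemma Omega_D:
  assumes "m \<in> Omega k N"
  shows "\<And>l. k < l \<Longrightarrow> m l = 0" "finite {l. 0 < m l}" "(\<Sum>l\<in>{l. 0 < m l}. m l) = N"
proof -
  have e: "{l. m l \<noteq> 0} = {l. 0 < m l}" by auto
  show "\<And>l. k < l \<Longrightarrow> m l = 0" "finite {l. 0 < m l}" "(\<Sum>l\<in>{l. 0 < m l}. m l) = N"
    using assms unfolding Omega_def e by auto
qed

lemma Omega_pos_le:
  assumes "m \<in> Omega k N" "0 < m l" shows "l \<le> k"
proof (rule ccontr)
  assume "\<not> l \<le> k" then have "k < l" by simp
  then show False using Omega_D(1)[OF assms(1)] assms(2) by simp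
qed

lemma Omega_le:
  assumes "m \<in> Omega k N" shows "m l \<le> N"
proof (cases "m l = 0")
  case False
  then have "m l \<le> (\<Sum>l\<in>{l. 0 < m l}. m l)"
    using Omega_D[OF assms] by (intro member_le_sum) auto
  then show ?thesis using Omega_D[OF assms] by simp
qed simp

lemma phi_facts:
  assumes "m \<in> Omega k N" "1 \<le> N"
  shows "phi k m \<le> k" "0 < m (phi k m)" "\<And>l. 0 < m l \<Longrightarrow> l \<le> phi k m"
proof -
  note D = Omega_D[OF assms(1)]
  have S: "{i. i \<le> k \<and> 0 < m i} = {l. 0 < m l}"
    using Omega_pos_le[OF assms(1)] by blast
  have ne: "{l. 0 < m l} \<noteq> {}"
  proof
    assume "{l. 0 < m l} = {}"
    then have "(\<Sum>l\<in>{l. 0 < m l}. m l) = 0" by simp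
    then show False using D(3) assms(2) by simp
  qed
  have ph: "phi k m = Max {l. 0 < m l}" unfolding phi_def S ..
  have mem: "phi k m \<in> {l. 0 < m l}" unfolding ph using D(2) ne by (rule Max_in)
  then show "0 < m (phi k m)" by simp
  then show "phi k m \<le> k" by (rule Omega_pos_le[OF assms(1)])
  show "\<And>l. 0 < m l \<Longrightarrow> l \<le> phi k m" unfolding ph using D(2) by (intro Max_ge) auto
qed

lemma phi_top:
  assumes "m \<in> Omega k N" "1 \<le> N"
  shows "0 < m k \<Longrightarrow> phi k m = k" and "phi k m \<le> k - 1 \<longleftrightarrow> m k = 0"
proof -
  note F = phi_facts[OF assms]
  show "0 < m k \<Longrightarrow> phi k m = k" using F(1) F(3)[of k] by simp
  show "phi k m \<le> k - 1 \<longleftrightarrow> m k = 0"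
  proof
    assume a: "phi k m \<le> k - 1"
    show "m k = 0"
    proof (rule ccontr)
      assume "m k \<noteq> 0" then have "k \<le> phi k m" using F(3)[of k] by simp
      then show False using a by simp
    qed
  next
    assume a: "m k = 0"
    have "phi k m \<noteq> k" using F(2) a by auto
    then show "phi k m \<le> k - 1" using F(1) by simp
  qed
qed

lemma config_ex:
  assumes "m \<in> Omega k N"
  shows "\<exists>x. \<forall>l. card {j. j < N \<and> x j = l} = m l"
proof -
  note D = Omega_D[OF assms]
  define M where "M = Abs_multiset m"
  have cM: "count M = m" unfolding M_def using D(2) by (rule count_Abs_multiset)
  obtain xs where xs: "mset xs = M" using ex_mset by blast
  have "length xs = size M" using xs by auto
  also have "size M = sum (count M) (set_mset M)" by (rule size_multiset_overloaded_eq)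
  also have "set_mset M = {l. 0 < m l}" using cM by (auto simp: set_mset_def)
  finally have len: "length xs = N" using D(3) cM by simp
  have "card {j. j < N \<and> xs ! j = l} = m l" for l
  proof -
    have "card {j. j < N \<and> xs ! j = l} = length (filter ((=) l) xs)"
      by (simp add: length_filter_conv_card len eq_commute)
    also have "\<dots> = count (mset xs) l" by (simp add: count_mset count_list_eq_length_filter)
    finally show ?thesis using xs cM by simp
  qed
  then show ?thesis by blast
qed

lemma config_prop:
  assumes "m \<in> Omega k N"
  shows "card {j. j < N \<and> config N m j = l} = m l"
  using someI_ex[OF config_ex[OF assms]] unfolding config_def by blast

lemma config_le_phi:
  assumes "m \<in> Omega k N" "1 \<le> N" "j < N"
  shows "config N m j \<le> phi k m"
proof -
  have "{j'. j' < N \<and> config N m j' = config N m j} \<noteq> {}" using assms(3) by auto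
  moreover have "finite {j'. j' < N \<and> config N m j' = config N m j}" by simp
  ultimately have "0 < card {j'. j' < N \<and> config N m j' = config N m j}"
    by (simp add: card_gt_0_iff)
  then have "0 < m (config N m j)" using config_prop[OF assms(1)] by simp
  then show ?thesis by (rule phi_facts(3)[OF assms(1,2)])
qed

lemma set_Pi_pmf_val:
  fixes N i j :: nat and p :: "int pmf"
  assumes "\<xi> \<in> set_pmf (Pi_pmf ({0..<N} \<times> {0..<N}) 0 (\<lambda>_. p))" "i < N" "j < N"
  shows "\<xi> (i, j) \<in> set_pmf p"
proof -
  have "\<xi> \<in> PiE_dflt ({0..<N} \<times> {0..<N}) 0 (set_pmf \<circ> (\<lambda>_. p))"
    using assms(1) by (subst (asm) set_Pi_pmf) auto
  then show ?thesis using assms(2,3) unfolding PiE_dflt_def by auto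
qed

lemma Max_char:
  fixes x :: "nat \<Rightarrow> int" and \<xi> :: "nat \<times> nat \<Rightarrow> int"
  assumes "1 \<le> N" "\<And>j. j < N \<Longrightarrow> x j \<le> ph" "\<And>j. j < N \<Longrightarrow> \<xi> (i, j) \<le> k"
  shows "Max {x j + \<xi> (i, j) | j. j < N} = ph + k \<longleftrightarrow> (\<exists>j. j < N \<and> x j = ph \<and> \<xi> (i, j) = k)"
proof -
  define T where "T = {x j + \<xi> (i, j) | j. j < N}"
  have T: "T = (\<lambda>j. x j + \<xi> (i, j)) ` {..<N}" unfolding T_def by auto
  have fin: "finite T" unfolding T by simp
  have ne: "T \<noteq> {}" unfolding T using assms(1) by (auto simp: lessThan_empty_iff)
  have bd: "\<And>t. t \<in> T \<Longrightarrow> t \<le> ph + k" unfolding T using assms(2,3) by (auto intro: add_mono)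
  have "Max T = ph + k \<longleftrightarrow> ph + k \<in> T"
  proof
    assume "Max T = ph + k" then show "ph + k \<in> T" using Max_in[OF fin ne] by simp
  next
    assume a: "ph + k \<in> T"
    have "ph + k \<le> Max T" using Max_ge[OF fin a] .
    moreover have "Max T \<le> ph + k" using bd Max_in[OF fin ne] by blast
    ultimately show "Max T = ph + k" by simp
  qed
  also have "\<dots> \<longleftrightarrow> (\<exists>j. j < N \<and> x j = ph \<and> \<xi> (i, j) = k)"
  proof
    assume "ph + k \<in> T"
    then obtain j where j: "j < N" "x j + \<xi> (i, j) = ph + k" unfolding T by auto
    then have "x j = ph \<and> \<xi> (i, j) = k" using assms(2)[OF j(1)] assms(3)[OF j(1)] by linarith
    then show "\<exists>j. j < N \<and> x j = ph \<and> \<xi> (i, j) = k" using j(1) by blast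
  next
    assume "\<exists>j. j < N \<and> x j = ph \<and> \<xi> (i, j) = k"
    then show "ph + k \<in> T" unfolding T by force
  qed
  finally show ?thesis unfolding T_def .
qed

lemma int_bounded:
  fixes f :: "'a \<Rightarrow> real"
  assumes "\<And>x. \<bar>f x\<bar> \<le> B"
  shows "integrable (measure_pmf M) f"
  by (intro measure_pmf.integrable_const_bound[where B=B]) (use assms in auto)

lemma exp_not_k:
  fixes p :: "int pmf"
  shows "measure_pmf.expectation p (\<lambda>v. if v = k then 0 else 1) = 1 - pmf p k"
proof -
  have e: "(\<lambda>v. if v = k then 0 else 1::real) = indicator (UNIV - {k})"
    by (auto simp: indicator_def fun_eq_iff)
  have "measure_pmf.prob p (UNIV - {k}) = 1 - measure_pmf.prob p {k}"
    using measure_pmf.prob_compl[of "{k}" p] by simp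
  then show ?thesis unfolding e by (simp add: measure_pmf_single)
qed

lemma exp_prod_rows:
  fixes p :: "int pmf" and N :: nat and S Lam :: "nat set"
  assumes S: "S \<subseteq> {0..<N}" and Lam: "Lam \<subseteq> {0..<N}"
  shows "measure_pmf.expectation (Pi_pmf ({0..<N} \<times> {0..<N}) 0 (\<lambda>_. p))
           (\<lambda>\<xi>. \<Prod>i\<in>S. \<Prod>j\<in>Lam. if \<xi> (i, j) = k then 0 else (1::real))
         = (1 - pmf p k) ^ (card S * card Lam)"
proof -
  define IJ where "IJ = {0..<N} \<times> {0..<N}"
  define g where "g ij v = (if ij \<in> S \<times> Lam then (if v = k then 0 else 1) else (1::real))" for ij v
  have finS: "finite S" using S finite_subset by blast
  have finL: "finite Lam" using Lam finite_subset by blast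
  have sub: "S \<times> Lam \<subseteq> IJ" using S Lam unfolding IJ_def by auto
  have finIJ: "finite IJ" unfolding IJ_def by simp
  have pw: "(\<Prod>i\<in>S. \<Prod>j\<in>Lam. if \<xi> (i, j) = k then 0 else (1::real)) = (\<Prod>ij\<in>IJ. g ij (\<xi> ij))" for \<xi>
  proof -
    have "(\<Prod>i\<in>S. \<Prod>j\<in>Lam. if \<xi> (i, j) = k then 0 else (1::real))
        = (\<Prod>ij\<in>S \<times> Lam. if \<xi> ij = k then 0 else (1::real))"
      by (subst prod.cartesian_product) (simp add: case_prod_beta)
    also have "\<dots> = (\<Prod>ij\<in>{ij\<in>IJ. ij \<in> S \<times> Lam}. if \<xi> ij = k then 0 else (1::real))"
      using sub by (intro prod.cong) auto
    also have "\<dots> = (\<Prod>ij\<in>IJ. g ij (\<xi> ij))"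
      unfolding g_def by (subst prod.inter_filter[OF finIJ]) simp
    finally show ?thesis .
  qed
  have "measure_pmf.expectation (Pi_pmf IJ 0 (\<lambda>_. p)) (\<lambda>\<xi>. \<Prod>ij\<in>IJ. g ij (\<xi> ij))
      = (\<Prod>ij\<in>IJ. measure_pmf.expectation p (\<lambda>v. g ij v))"
    by (rule expectation_prod_Pi_pmf[OF finIJ]) (auto simp: g_def intro!: int_bounded[where B=1])
  also have "\<dots> = (\<Prod>ij\<in>IJ. if ij \<in> S \<times> Lam then 1 - pmf p k else 1)"
    by (intro prod.cong refl) (simp add: g_def exp_not_k)
  also have "\<dots> = (\<Prod>ij\<in>{ij\<in>IJ. ij \<in> S \<times> Lam}. 1 - pmf p k)"
    by (subst prod.inter_filter[OF finIJ]) simp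
  also have "{ij\<in>IJ. ij \<in> S \<times> Lam} = S \<times> Lam" using sub by auto
  also have "(\<Prod>ij\<in>S \<times> Lam. 1 - pmf p k) = (1 - pmf p k) ^ (card S * card Lam)"
    by (simp add: card_cartesian_product)
  finally show ?thesis unfolding IJ_def[symmetric] pw .
qed

lemma pow_card_filter:
  fixes y :: real
  assumes "finite I"
  shows "y ^ card {i\<in>I. Q i} = (\<Prod>i\<in>I. if Q i then y else 1)"
proof -
  have "y ^ card {i\<in>I. Q i} = (\<Prod>i\<in>{i\<in>I. Q i}. y)" by simp
  also have "\<dots> = (\<Prod>i\<in>I. if Q i then y else 1)" by (rule prod.inter_filter[OF assms])
  finally show ?thesis .
qed

lemma prod_indicator_row:
  assumes "finite Lam"
  shows "(\<Prod>j\<in>Lam. if \<xi> (i, j) = k then 0 else (1::real)) = (if \<exists>j\<in>Lam. \<xi> (i, j) = k then 0 else 1)"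
proof (cases "\<exists>j\<in>Lam. \<xi> (i, j) = k")
  case True
  then show ?thesis using assms by (auto intro: prod_zero)
next
  case False
  then show ?thesis by (auto intro: prod.neutral)
qed

lemma kernel_gen:
  fixes p :: "int pmf" and y :: real
  assumes m: "m \<in> Omega k N" and N: "1 \<le> N" and supp: "set_pmf p \<subseteq> {l. l \<le> k}"
    and y: "0 \<le> y" "y \<le> 1"
  shows "measure_pmf.expectation (Zkernel p k N m) (\<lambda>m'. y ^ m' k)
       = ((1 - y) * (1 - pmf p k) ^ m (phi k m) + y) ^ N"
proof -
  define I where "I = {0..<N}"
  define P where "P = Pi_pmf ({0..<N} \<times> {0..<N}) 0 (\<lambda>_. p)"
  define ph where "ph = phi k m"
  define x where "x = config N m"
  define Lam where "Lam = {j. j < N \<and> x j = ph}"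
  define q where "q = 1 - pmf p k"
  define X where "X i \<xi> = (\<Prod>j\<in>Lam. if \<xi> (i, j) = k then 0 else (1::real))" for i :: nat and \<xi> :: "nat \<times> nat \<Rightarrow> int"
  have finI: "finite I" unfolding I_def by simp
  have LamI: "Lam \<subseteq> I" unfolding Lam_def I_def by auto
  have finL: "finite Lam" using LamI finI finite_subset by blast
  have cardL: "card Lam = m ph" unfolding Lam_def x_def using config_prop[OF m] .
  have cardI: "card I = N" unfolding I_def by simp
  have Xb: "0 \<le> X i \<xi> \<and> X i \<xi> \<le> 1" for i \<xi>
    unfolding X_def prod_indicator_row[OF finL] by auto
  have step1: "measure_pmf.expectation (Zkernel p k N m) (\<lambda>m'. y ^ m' k)
     = measure_pmf.expectation P (\<lambda>\<xi>. y ^ card {i. i < N \<and> Max {x j + \<xi> (i, j) | j. j < N} = ph + k})"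
    unfolding Zkernel_def P_def x_def ph_def by simp
  have step2: "measure_pmf.expectation P (\<lambda>\<xi>. y ^ card {i. i < N \<and> Max {x j + \<xi> (i, j) | j. j < N} = ph + k})
     = measure_pmf.expectation P (\<lambda>\<xi>. \<Prod>i\<in>I. (1 - y) * X i \<xi> + y)"
  proof (intro integral_cong_AE AE_pmfI)
    fix \<xi> assume xi: "\<xi> \<in> set_pmf P"
    have le: "\<And>i j. i < N \<Longrightarrow> j < N \<Longrightarrow> \<xi> (i, j) \<le> k"
      using set_Pi_pmf_val[OF xi[unfolded P_def]] supp by blast
    have xle: "\<And>j. j < N \<Longrightarrow> x j \<le> ph" unfolding x_def ph_def using config_le_phi[OF m N] .
    have "{i. i < N \<and> Max {x j + \<xi> (i, j) | j. j < N} = ph + k} = {i\<in>I. \<exists>j\<in>Lam. \<xi> (i, j) = k}"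
    proof -
      have "\<And>i. i < N \<Longrightarrow> (Max {x j + \<xi> (i, j) | j. j < N} = ph + k) = (\<exists>j\<in>Lam. \<xi> (i, j) = k)"
      proof -
        fix i assume i: "i < N"
        have "\<And>j. j < N \<Longrightarrow> \<xi> (i, j) \<le> k" using le[OF i] .
        from Max_char[of N x ph \<xi> i k, OF N xle this]
        show "(Max {x j + \<xi> (i, j) | j. j < N} = ph + k) = (\<exists>j\<in>Lam. \<xi> (i, j) = k)"
          unfolding Lam_def by auto
      qed
      then show ?thesis unfolding I_def by auto
    qed
    then have "y ^ card {i. i < N \<and> Max {x j + \<xi> (i, j) | j. j < N} = ph + k}
        = (\<Prod>i\<in>I. if \<exists>j\<in>Lam. \<xi> (i, j) = k then y else 1)"
      using pow_card_filter[OF finI] by simp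
    also have "\<dots> = (\<Prod>i\<in>I. (1 - y) * X i \<xi> + y)"
      unfolding X_def prod_indicator_row[OF finL] by (intro prod.cong) auto
    finally show "y ^ card {i. i < N \<and> Max {x j + \<xi> (i, j) | j. j < N} = ph + k}
        = (\<Prod>i\<in>I. (1 - y) * X i \<xi> + y)" .
  qed auto
  have step3: "(\<lambda>\<xi>. \<Prod>i\<in>I. (1 - y) * X i \<xi> + y)
      = (\<lambda>\<xi>. \<Sum>S\<in>Pow I. (1 - y) ^ card S * y ^ card (I - S) * (\<Prod>i\<in>S. X i \<xi>))"
  proof
    fix \<xi>
    have "(\<Prod>i\<in>I. (1 - y) * X i \<xi> + y) = (\<Sum>S\<in>Pow I. (\<Prod>i\<in>S. (1 - y) * X i \<xi>) * (\<Prod>i\<in>I - S. y))"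
      by (rule prod_add[OF finI])
    also have "\<dots> = (\<Sum>S\<in>Pow I. (1 - y) ^ card S * y ^ card (I - S) * (\<Prod>i\<in>S. X i \<xi>))"
      by (intro sum.cong refl) (simp add: prod.distrib)
    finally show "(\<Prod>i\<in>I. (1 - y) * X i \<xi> + y)
      = (\<Sum>S\<in>Pow I. (1 - y) ^ card S * y ^ card (I - S) * (\<Prod>i\<in>S. X i \<xi>))" .
  qed
  have intS: "integrable (measure_pmf P) (\<lambda>\<xi>. (1 - y) ^ card S * y ^ card (I - S) * (\<Prod>i\<in>S. X i \<xi>))" for S
  proof (rule int_bounded[where B="\<bar>(1 - y) ^ card S * y ^ card (I - S)\<bar>"])
    fix \<xi>
    have "\<bar>\<Prod>i\<in>S. X i \<xi>\<bar> \<le> 1"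
      using Xb by (simp add: abs_prod prod_le_1)
    then show "\<bar>(1 - y) ^ card S * y ^ card (I - S) * (\<Prod>i\<in>S. X i \<xi>)\<bar> \<le> \<bar>(1 - y) ^ card S * y ^ card (I - S)\<bar>"
      by (simp add: abs_mult mult_left_le)
  qed
  have step4: "measure_pmf.expectation P (\<lambda>\<xi>. \<Sum>S\<in>Pow I. (1 - y) ^ card S * y ^ card (I - S) * (\<Prod>i\<in>S. X i \<xi>))
     = (\<Sum>S\<in>Pow I. (1 - y) ^ card S * y ^ card (I - S) * (q ^ m ph) ^ card S)"
  proof -
    have "measure_pmf.expectation P (\<lambda>\<xi>. \<Sum>S\<in>Pow I. (1 - y) ^ card S * y ^ card (I - S) * (\<Prod>i\<in>S. X i \<xi>))
       = (\<Sum>S\<in>Pow I. measure_pmf.expectation P (\<lambda>\<xi>. (1 - y) ^ card S * y ^ card (I - S) * (\<Prod>i\<in>S. X i \<xi>)))"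
      by (rule Bochner_Integration.integral_sum) (rule intS)
    also have "\<dots> = (\<Sum>S\<in>Pow I. (1 - y) ^ card S * y ^ card (I - S) * (q ^ m ph) ^ card S)"
    proof (intro sum.cong refl)
      fix S assume "S \<in> Pow I"
      then have SI: "S \<subseteq> {0..<N}" unfolding I_def by auto
      have "measure_pmf.expectation P (\<lambda>\<xi>. \<Prod>i\<in>S. X i \<xi>) = q ^ (card S * card Lam)"
        unfolding P_def X_def q_def using exp_prod_rows[OF SI] LamI unfolding I_def by blast
      then show "measure_pmf.expectation P (\<lambda>\<xi>. (1 - y) ^ card S * y ^ card (I - S) * (\<Prod>i\<in>S. X i \<xi>))
          = (1 - y) ^ card S * y ^ card (I - S) * (q ^ m ph) ^ card S"
        by (simp add: cardL power_mult[symmetric] mult.commute)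
    qed
    finally show ?thesis .
  qed
  have step5: "(\<Sum>S\<in>Pow I. (1 - y) ^ card S * y ^ card (I - S) * (q ^ m ph) ^ card S)
     = ((1 - y) * q ^ m ph + y) ^ N"
  proof -
    have "(\<Sum>S\<in>Pow I. (1 - y) ^ card S * y ^ card (I - S) * (q ^ m ph) ^ card S)
        = (\<Sum>S\<in>Pow I. (\<Prod>i\<in>S. (1 - y) * q ^ m ph) * (\<Prod>i\<in>I - S. y))"
      by (intro sum.cong refl) (simp add: power_mult_distrib)
    also have "\<dots> = (\<Prod>i\<in>I. (1 - y) * q ^ m ph + y)" by (rule prod_add[OF finI, symmetric])
    also have "\<dots> = ((1 - y) * q ^ m ph + y) ^ N" using cardI by simp
    finally show ?thesis .
  qed
  show ?thesis using step1 step2 step3 step4 step5 unfolding q_def ph_def by simp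
qed

lemma stationary_system:
  fixes p :: "int pmf" and \<nu> :: "(int \<Rightarrow> nat) pmf"
  assumes supp: "set_pmf p \<subseteq> {l. l \<le> k}" and pk: "0 < pmf p k" "pmf p k < 1"
    and N: "1 \<le> N" and inv: "invariant_Z p k N \<nu>"
  defines "q \<equiv> 1 - pmf p k"
  defines "\<Phi> \<equiv> (\<lambda>t. measure_pmf.expectation \<nu> (\<lambda>m. (q ^ m (phi k m)) ^ t))"
  shows "\<Phi> 0 = 1" "\<And>t. q ^ (N * t) \<le> \<Phi> t"
    "measure_pmf.prob \<nu> {m. phi k m \<le> k - 1} = \<Phi> N"
    "\<And>s. 1 \<le> s \<Longrightarrow> s \<le> N \<Longrightarrow>
        \<Phi> s + (1 - q ^ s) * \<Phi> N \<le> (\<Sum>t\<le>N. real (N choose t) * (1 - q ^ s) ^ t * q ^ (s * (N - t)) * \<Phi> t)"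
    "(\<Sum>t\<le>N. real (N choose t) * (1 - q ^ N) ^ t * q ^ (N * (N - t)) * \<Phi> t) \<le> 2 * \<Phi> N"
proof -
  define a where "a m = q ^ m (phi k m)" for m :: "int \<Rightarrow> nat"
  have q0: "0 < q" "q < 1" unfolding q_def using pk by auto
  have Om: "\<And>m. m \<in> set_pmf \<nu> \<Longrightarrow> m \<in> Omega k N" using inv unfolding invariant_Z_def by auto
  have bind: "bind_pmf \<nu> (Zkernel p k N) = \<nu>" using inv unfolding invariant_Z_def by auto
  have a01: "0 \<le> a m \<and> a m \<le> 1" for m unfolding a_def using q0 by (simp add: power_le_one)
  have aq: "q ^ N \<le> a m \<and> a m \<le> q" if "m \<in> set_pmf \<nu>" for m
  proof -
    have "0 < m (phi k m)" "m (phi k m) \<le> N" using phi_facts(2)[OF Om[OF that] N] Omega_le[OF Om[OF that]] by auto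
    then have "q ^ m (phi k m) \<le> q ^ 1" "q ^ N \<le> q ^ m (phi k m)"
      using q0 power_decreasing[of 1 "m (phi k m)" q] power_decreasing[of "m (phi k m)" N q] by auto
    then show ?thesis unfolding a_def by simp
  qed
  have intp: "integrable (measure_pmf \<nu>) (\<lambda>m. a m ^ t)" for t
    by (rule int_bounded[where B=1]) (use a01 in \<open>auto intro: power_le_one\<close>)
  have Phi_a: "\<Phi> t = measure_pmf.expectation \<nu> (\<lambda>m. a m ^ t)" for t unfolding \<Phi>_def a_def ..
  have G: "measure_pmf.expectation \<nu> (\<lambda>m. y ^ m k) = measure_pmf.expectation \<nu> (\<lambda>m. ((1 - y) * a m + y) ^ N)"
    if y: "0 \<le> y" "y \<le> 1" for y :: real
  proof -
    have "measure_pmf.expectation \<nu> (\<lambda>m. y ^ m k)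
        = measure_pmf.expectation (bind_pmf \<nu> (Zkernel p k N)) (\<lambda>m. y ^ m k)" using bind by simp
    also have "\<dots> = measure_pmf.expectation \<nu> (\<lambda>m. measure_pmf.expectation (Zkernel p k N m) (\<lambda>m'. y ^ m' k))"
      by (rule exp_bind_bounded[where B=1]) (use y in \<open>auto intro: power_le_one\<close>)
    also have "\<dots> = measure_pmf.expectation \<nu> (\<lambda>m. ((1 - y) * a m + y) ^ N)"
      by (intro integral_cong_AE AE_pmfI) (auto simp: a_def q_def intro!: kernel_gen[OF Om _ supp y] N)
    finally show ?thesis .
  qed
  have expand: "measure_pmf.expectation \<nu> (\<lambda>m. ((1 - y) * a m + y) ^ N)
      = (\<Sum>t\<le>N. real (N choose t) * (1 - y) ^ t * y ^ (N - t) * \<Phi> t)" for y :: real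
  proof -
    have "measure_pmf.expectation \<nu> (\<lambda>m. ((1 - y) * a m + y) ^ N)
        = measure_pmf.expectation \<nu> (\<lambda>m. \<Sum>t\<le>N. (real (N choose t) * (1 - y) ^ t * y ^ (N - t)) * a m ^ t)"
      by (intro Bochner_Integration.integral_cong refl) (simp add: binomial_ring power_mult_distrib mult_ac)
    also have "\<dots> = (\<Sum>t\<le>N. measure_pmf.expectation \<nu> (\<lambda>m. (real (N choose t) * (1 - y) ^ t * y ^ (N - t)) * a m ^ t))"
      by (rule Bochner_Integration.integral_sum) (auto intro: intp)
    also have "\<dots> = (\<Sum>t\<le>N. real (N choose t) * (1 - y) ^ t * y ^ (N - t) * \<Phi> t)"
      by (simp add: Phi_a)
    finally show ?thesis .
  qed
  define Z where "Z = measure_pmf.expectation \<nu> (\<lambda>m. (0::real) ^ m k)"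
  have ZPhi: "Z = \<Phi> N"
    unfolding Z_def using G[of 0] by (simp add: Phi_a)
  show "\<Phi> 0 = 1" unfolding \<Phi>_def by simp
  show "\<And>t. q ^ (N * t) \<le> \<Phi> t"
  proof -
    fix t
    have "measure_pmf.expectation \<nu> (\<lambda>m. q ^ (N * t)) \<le> measure_pmf.expectation \<nu> (\<lambda>m. a m ^ t)"
      by (intro integral_mono_AE AE_pmfI intp)
         (auto intro!: power_mono simp: power_mult aq q0 less_imp_le)
    then show "q ^ (N * t) \<le> \<Phi> t" by (simp add: Phi_a)
  qed
  show "measure_pmf.prob \<nu> {m. phi k m \<le> k - 1} = \<Phi> N"
  proof -
    have "measure_pmf.prob \<nu> {m. phi k m \<le> k - 1} = measure_pmf.expectation \<nu> (indicator {m. phi k m \<le> k - 1})"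
      by simp
    also have "\<dots> = Z" unfolding Z_def
    proof (intro integral_cong_AE AE_pmfI)
      fix m assume "m \<in> set_pmf \<nu>"
      then have e: "phi k m \<le> k - 1 \<longleftrightarrow> m k = 0" by (rule phi_top(2)[OF Om N])
      show "indicator {m. phi k m \<le> k - 1} m = (0::real) ^ m k"
        using e by (cases "m k") (auto simp: indicator_def)
    qed auto
    finally show ?thesis using ZPhi by simp
  qed
  have pt: "(q ^ s) ^ m k = a m ^ s + (1 - a m ^ s) * 0 ^ m k" if "m \<in> set_pmf \<nu>" for m s
  proof (cases "m k = 0")
    case False
    then have "phi k m = k" using phi_top(1)[OF Om[OF that] N] by simp
    then show ?thesis using False by (simp add: a_def power_mult[symmetric] mult.commute)
  qed simp
  have intZ: "integrable (measure_pmf \<nu>) (\<lambda>m. (1 - a m ^ s) * 0 ^ m k)" for s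
  proof (rule int_bounded[where B=1])
    fix m
    have "0 \<le> a m ^ s" "a m ^ s \<le> 1" using a01[of m] by (auto intro: power_le_one)
    then show "\<bar>(1 - a m ^ s) * 0 ^ m k\<bar> \<le> 1" by (cases "m k") auto
  qed
  have intZ0: "integrable (measure_pmf \<nu>) (\<lambda>m. (0::real) ^ m k)"
  proof (rule int_bounded[where B=1])
    fix m :: "int \<Rightarrow> nat" show "\<bar>(0::real) ^ m k\<bar> \<le> 1" by (cases "m k") auto
  qed
  have split: "measure_pmf.expectation \<nu> (\<lambda>m. (q ^ s) ^ m k)
      = \<Phi> s + measure_pmf.expectation \<nu> (\<lambda>m. (1 - a m ^ s) * 0 ^ m k)" for s
  proof -
    have "measure_pmf.expectation \<nu> (\<lambda>m. (q ^ s) ^ m k)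
        = measure_pmf.expectation \<nu> (\<lambda>m. a m ^ s + (1 - a m ^ s) * 0 ^ m k)"
      by (intro integral_cong_AE AE_pmfI) (auto simp: pt)
    also have "\<dots> = \<Phi> s + measure_pmf.expectation \<nu> (\<lambda>m. (1 - a m ^ s) * 0 ^ m k)"
      by (subst Bochner_Integration.integral_add) (auto intro: intp intZ simp: Phi_a)
    finally show ?thesis .
  qed
  have Gq: "measure_pmf.expectation \<nu> (\<lambda>m. (q ^ s) ^ m k)
      = (\<Sum>t\<le>N. real (N choose t) * (1 - q ^ s) ^ t * q ^ (s * (N - t)) * \<Phi> t)" for s
  proof -
    have "0 \<le> q ^ s" "q ^ s \<le> 1" using q0 by (auto intro: power_le_one)
    from G[OF this] show ?thesis unfolding expand by (simp add: power_mult)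
  qed
  show "\<And>s. 1 \<le> s \<Longrightarrow> s \<le> N \<Longrightarrow>
        \<Phi> s + (1 - q ^ s) * \<Phi> N \<le> (\<Sum>t\<le>N. real (N choose t) * (1 - q ^ s) ^ t * q ^ (s * (N - t)) * \<Phi> t)"
  proof -
    fix s :: nat
    have "(1 - q ^ s) * Z = measure_pmf.expectation \<nu> (\<lambda>m. (1 - q ^ s) * 0 ^ m k)"
      unfolding Z_def by simp
    also have "\<dots> \<le> measure_pmf.expectation \<nu> (\<lambda>m. (1 - a m ^ s) * 0 ^ m k)"
    proof (intro integral_mono_AE AE_pmfI intZ)
      show "integrable (measure_pmf \<nu>) (\<lambda>m. (1 - q ^ s) * 0 ^ m k)" using intZ0 by simp
      fix m assume "m \<in> set_pmf \<nu>"
      then have "a m ^ s \<le> q ^ s" using aq a01 by (auto intro: power_mono)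
      then show "(1 - q ^ s) * 0 ^ m k \<le> (1 - a m ^ s) * 0 ^ m k" by (cases "m k") auto
    qed
    finally have h: "(1 - q ^ s) * Z \<le> measure_pmf.expectation \<nu> (\<lambda>m. (1 - a m ^ s) * 0 ^ m k)" .
    have h2: "(1 - q ^ s) * \<Phi> N \<le> measure_pmf.expectation \<nu> (\<lambda>m. (1 - a m ^ s) * 0 ^ m k)"
      using h unfolding ZPhi .
    show "\<Phi> s + (1 - q ^ s) * \<Phi> N \<le> (\<Sum>t\<le>N. real (N choose t) * (1 - q ^ s) ^ t * q ^ (s * (N - t)) * \<Phi> t)"
      using split[of s] Gq[of s] h2 by linarith
  qed
  show "(\<Sum>t\<le>N. real (N choose t) * (1 - q ^ N) ^ t * q ^ (N * (N - t)) * \<Phi> t) \<le> 2 * \<Phi> N"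
  proof -
    have "measure_pmf.expectation \<nu> (\<lambda>m. (1 - a m ^ N) * 0 ^ m k) \<le> Z"
      unfolding Z_def
    proof (intro integral_mono_AE AE_pmfI intZ intZ0)
      fix m assume "m \<in> set_pmf \<nu>"
      have "0 \<le> a m ^ N" using a01 by simp
      then show "(1 - a m ^ N) * 0 ^ m k \<le> 0 ^ m k" by (cases "m k") auto
    qed
    then have "measure_pmf.expectation \<nu> (\<lambda>m. (1 - a m ^ N) * 0 ^ m k) \<le> \<Phi> N" unfolding ZPhi .
    then show ?thesis using split[of N] Gq[of N] by linarith
  qed
qed

lemma comparison:
  fixes G H e :: "nat \<Rightarrow> real" and B :: "nat \<Rightarrow> nat \<Rightarrow> real"
  assumes fin: "finite K"
    and G: "\<And>s. s \<in> K \<Longrightarrow> G s \<le> e s + (\<Sum>t\<in>K. B s t * G t)"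
    and H: "\<And>s. s \<in> K \<Longrightarrow> e s + (\<Sum>t\<in>K. B s t * H t) \<le> H s"
    and B: "\<And>s t. s \<in> K \<Longrightarrow> t \<in> K \<Longrightarrow> 0 \<le> B s t"
    and e: "\<And>s. s \<in> K \<Longrightarrow> 0 < e s"
    and Hp: "\<And>s. s \<in> K \<Longrightarrow> 0 < H s"
  shows "\<And>s. s \<in> K \<Longrightarrow> G s \<le> H s"
proof (rule ccontr)
  fix s0 assume s0: "s0 \<in> K" and ns: "\<not> G s0 \<le> H s0"
  define r where "r s = G s / H s" for s
  have ne: "r ` K \<noteq> {}" using s0 by auto
  define lam where "lam = Max (r ` K)"
  obtain s1 where s1: "s1 \<in> K" "r s1 = lam" using Max_in[OF finite_imageI[OF fin] ne] unfolding lam_def by auto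
  have ge: "r s \<le> lam" if "s \<in> K" for s unfolding lam_def using fin that by auto
  have "1 < r s0" using ns Hp[OF s0] unfolding r_def by (simp add: field_simps)
  then have lam1: "1 < lam" using ge[OF s0] by simp
  have Gle: "G t \<le> lam * H t" if "t \<in> K" for t
    using ge[OF that] Hp[OF that] unfolding r_def by (simp add: field_simps)
  have "G s1 \<le> e s1 + (\<Sum>t\<in>K. B s1 t * G t)" using G[OF s1(1)] .
  also have "\<dots> \<le> e s1 + (\<Sum>t\<in>K. B s1 t * (lam * H t))"
    by (intro add_left_mono sum_mono mult_left_mono Gle B s1(1))
  also have "\<dots> = e s1 + lam * (\<Sum>t\<in>K. B s1 t * H t)"
    by (simp add: sum_distrib_left mult_ac)
  also have "\<dots> \<le> e s1 + lam * (H s1 - e s1)"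
    using H[OF s1(1)] lam1 by (intro add_left_mono mult_left_mono) auto
  also have "\<dots> < lam * H s1"
    using e[OF s1(1)] lam1 by (simp add: algebra_simps)
  finally have "G s1 < lam * H s1" .
  moreover have "G s1 = lam * H s1" using s1(2) Hp[OF s1(1)] unfolding r_def by (simp add: field_simps)
  ultimately show False by simp
qed

lemma pow_diff_bounds:
  fixes a b :: real
  assumes "0 \<le> b" "b \<le> a"
  shows "a ^ n - b ^ n \<le> real n * (a - b) * a ^ (n - 1)"
    and "real n * (a - b) * b ^ (n - 1) \<le> a ^ n - b ^ n"
proof -
  have eq: "a ^ n - b ^ n = (a - b) * (\<Sum>i<n. b ^ (n - Suc i) * a ^ i)"
    by (rule power_diff_sumr2)
  have up: "b ^ (n - Suc i) * a ^ i \<le> a ^ (n - 1)" if "i < n" for i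
  proof -
    have "b ^ (n - Suc i) * a ^ i \<le> a ^ (n - Suc i) * a ^ i"
      using assms by (intro mult_right_mono power_mono) auto
    also have "\<dots> = a ^ (n - 1)" using that by (simp add: power_add[symmetric])
    finally show ?thesis .
  qed
  have lo: "b ^ (n - 1) \<le> b ^ (n - Suc i) * a ^ i" if "i < n" for i
  proof -
    have "b ^ (n - 1) = b ^ (n - Suc i) * b ^ i" using that by (simp add: power_add[symmetric])
    also have "\<dots> \<le> b ^ (n - Suc i) * a ^ i"
      using assms by (intro mult_left_mono power_mono) auto
    finally show ?thesis .
  qed
  have "(\<Sum>i<n. b ^ (n - Suc i) * a ^ i) \<le> (\<Sum>i<n. a ^ (n - 1))" by (intro sum_mono up) auto
  then have "(\<Sum>i<n. b ^ (n - Suc i) * a ^ i) \<le> real n * a ^ (n - 1)" by simp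
  then show "a ^ n - b ^ n \<le> real n * (a - b) * a ^ (n - 1)"
  proof -
    assume h: "(\<Sum>i<n. b ^ (n - Suc i) * a ^ i) \<le> real n * a ^ (n - 1)"
    have "(a - b) * (\<Sum>i<n. b ^ (n - Suc i) * a ^ i) \<le> (a - b) * (real n * a ^ (n - 1))"
      using assms h by (intro mult_left_mono) auto
    then show ?thesis unfolding eq by (simp add: mult_ac)
  qed
  have "(\<Sum>i<n. b ^ (n - 1)) \<le> (\<Sum>i<n. b ^ (n - Suc i) * a ^ i)" by (intro sum_mono lo) auto
  then have "real n * b ^ (n - 1) \<le> (\<Sum>i<n. b ^ (n - Suc i) * a ^ i)" by simp
  then show "real n * (a - b) * b ^ (n - 1) \<le> a ^ n - b ^ n"
  proof -
    assume h: "real n * b ^ (n - 1) \<le> (\<Sum>i<n. b ^ (n - Suc i) * a ^ i)"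
    have "(a - b) * (real n * b ^ (n - 1)) \<le> (a - b) * (\<Sum>i<n. b ^ (n - Suc i) * a ^ i)"
      using assms h by (intro mult_left_mono) auto
    then show ?thesis unfolding eq by (simp add: mult_ac)
  qed
qed

definition beta :: "real \<Rightarrow> real" where "beta q = (1 + q) / (2 * q)"

definition Ef :: "real \<Rightarrow> nat \<Rightarrow> real \<Rightarrow> real" where
  "Ef q N x = (\<Sum>j\<in>{1..N}. real (N choose j) * beta q ^ j * ((x + q ^ j) ^ N - (q ^ j) ^ N))"

definition Wf :: "real \<Rightarrow> nat \<Rightarrow> real \<Rightarrow> real" where
  "Wf q N y = (\<Sum>j\<in>{1..N}. real (N choose j) * beta q ^ j * ((y + q ^ j) / (1 + y)) ^ (N - 1))"

lemma beta_ge: "0 < q \<Longrightarrow> q < 1 \<Longrightarrow> 1 < beta q"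
  unfolding beta_def by (simp add: field_simps)

lemma sum_binom_shift:
  fixes x c :: real
  shows "(\<Sum>t\<in>{1..N}. real (N choose t) * x ^ t * c ^ (N - t)) = (x + c) ^ N - c ^ N"
proof -
  have "(x + c) ^ N = (\<Sum>t\<le>N. real (N choose t) * x ^ t * c ^ (N - t))" by (rule binomial_ring)
  also have "{..N} = insert 0 {1..N}" by auto
  also have "(\<Sum>t\<in>insert 0 {1..N}. real (N choose t) * x ^ t * c ^ (N - t))
      = c ^ N + (\<Sum>t\<in>{1..N}. real (N choose t) * x ^ t * c ^ (N - t))" by (subst sum.insert) auto
  finally show ?thesis by simp
qed

lemma sumF_identity:
  fixes q x :: real
  shows "(\<Sum>t\<in>{1..N}. real (N choose t) * x ^ t * (1 + beta q * q ^ (N - t)) ^ N)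
       = ((1 + x) ^ N - 1) + Ef q N x"
proof -
  have "(\<Sum>t\<in>{1..N}. real (N choose t) * x ^ t * (1 + beta q * q ^ (N - t)) ^ N)
      = (\<Sum>t\<in>{1..N}. \<Sum>j\<le>N. real (N choose j) * beta q ^ j * (real (N choose t) * x ^ t * (q ^ j) ^ (N - t)))"
  proof (intro sum.cong refl)
    fix t
    have "(1 + beta q * q ^ (N - t)) ^ N = (beta q * q ^ (N - t) + 1) ^ N" by (simp add: add.commute)
    also have "\<dots> = (\<Sum>j\<le>N. real (N choose j) * (beta q * q ^ (N - t)) ^ j * 1 ^ (N - j))"
      by (rule binomial_ring)
    finally show "real (N choose t) * x ^ t * (1 + beta q * q ^ (N - t)) ^ N
      = (\<Sum>j\<le>N. real (N choose j) * beta q ^ j * (real (N choose t) * x ^ t * (q ^ j) ^ (N - t)))"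
      by (simp add: sum_distrib_left power_mult_distrib power_mult[symmetric] mult.commute mult.left_commute)
  qed
  also have "\<dots> = (\<Sum>j\<le>N. real (N choose j) * beta q ^ j * (\<Sum>t\<in>{1..N}. real (N choose t) * x ^ t * (q ^ j) ^ (N - t)))"
    by (subst sum.swap) (simp add: sum_distrib_left)
  also have "\<dots> = (\<Sum>j\<le>N. real (N choose j) * beta q ^ j * ((x + q ^ j) ^ N - (q ^ j) ^ N))"
    by (intro sum.cong refl, subst sum_binom_shift, rule refl)
  also have "{..N} = insert 0 {1..N}" by auto
  also have "(\<Sum>j\<in>insert 0 {1..N}. real (N choose j) * beta q ^ j * ((x + q ^ j) ^ N - (q ^ j) ^ N))
      = ((x + 1) ^ N - 1) + Ef q N x" unfolding Ef_def by (subst sum.insert) auto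
  finally show ?thesis by (metis add.commute)
qed

lemma sumF1_identity:
  fixes q x :: real
  shows "(\<Sum>t\<in>{1..N}. real (N choose t) * x ^ t * ((1 + beta q * q ^ (N - t)) ^ N - 1)) = Ef q N x"
proof -
  have "(\<Sum>t\<in>{1..N}. real (N choose t) * x ^ t * ((1 + beta q * q ^ (N - t)) ^ N - 1))
     = (\<Sum>t\<in>{1..N}. real (N choose t) * x ^ t * (1 + beta q * q ^ (N - t)) ^ N)
       - (\<Sum>t\<in>{1..N}. real (N choose t) * x ^ t * 1 ^ (N - t))"
    by (simp add: sum_subtractf algebra_simps)
  also have "\<dots> = Ef q N x" unfolding sumF_identity sum_binom_shift by (simp add: add.commute[of x 1])
  finally show ?thesis .
qed

lemma super_ineq:
  fixes q x y :: real
  assumes q: "0 < q" "q < 1" and N: "1 \<le> N"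
    and C1: "Wf q N q \<le> (beta q - 1) / 2" and C2: "(2 * q / (1 + q)) ^ (N - 1) \<le> (beta q - 1) / 4"
    and x: "0 \<le> x" "x \<le> y" "y \<le> q"
  shows "(1 + x) ^ N + Ef q N x \<le> (1 + beta q * y) ^ N"
    and "1 + 2 ^ N * x ^ N + Ef q N x \<le> (1 + beta q * y) ^ N"
proof -
  define b where "b = beta q"
  have b1: "1 < b" unfolding b_def using beta_ge q by simp
  have y0: "0 \<le> y" using x by simp
  have qj: "0 < q ^ j" "q ^ j \<le> 1" for j :: nat using q by (auto intro: power_le_one)
  have Emono: "Ef q N x \<le> Ef q N y"
    unfolding Ef_def using x qj b1
    by (intro sum_mono mult_left_mono diff_right_mono power_mono) (auto simp: b_def[symmetric])
  have Ebound: "Ef q N y \<le> real N * y * (1 + y) ^ (N - 1) * Wf q N y"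
  proof -
    have "Ef q N y \<le> (\<Sum>j\<in>{1..N}. real (N choose j) * b ^ j * (real N * y * (y + q ^ j) ^ (N - 1)))"
      unfolding Ef_def b_def[symmetric]
    proof (intro sum_mono mult_left_mono)
      fix j
      show "(y + q ^ j) ^ N - (q ^ j) ^ N \<le> real N * y * (y + q ^ j) ^ (N - 1)"
        using pow_diff_bounds(1)[of "q ^ j" "y + q ^ j" N] qj[of j] y0 by simp
      show "0 \<le> real (N choose j) * b ^ j" using b1 by simp
    qed
    also have "\<dots> = real N * y * (1 + y) ^ (N - 1) * Wf q N y"
      unfolding Wf_def b_def[symmetric] sum_distrib_left
      using y0 by (intro sum.cong refl) (simp add: power_divide field_simps)
    finally show ?thesis .
  qed
  have Wmono: "Wf q N y \<le> Wf q N q"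
    unfolding Wf_def
  proof (intro sum_mono mult_left_mono power_mono)
    fix j
    have "(y + q ^ j) * (1 + q) \<le> (q + q ^ j) * (1 + y)"
    proof -
      have "y * (1 - q ^ j) \<le> q * (1 - q ^ j)" using x qj[of j] by (intro mult_right_mono) auto
      then show ?thesis by (simp add: algebra_simps)
    qed
    then show "(y + q ^ j) / (1 + y) \<le> (q + q ^ j) / (1 + q)"
      using y0 q by (simp add: field_simps)
    show "0 \<le> (y + q ^ j) / (1 + y)" using y0 qj[of j] by simp
    show "0 \<le> real (N choose j) * beta q ^ j" using b1 b_def by simp
  qed
  define D where "D = real N * (b - 1) * y * (1 + y) ^ (N - 1)"
  have D0: "0 \<le> D" unfolding D_def using b1 y0 by simp
  have Dle: "D \<le> (1 + b * y) ^ N - (1 + y) ^ N"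
  proof -
    have "1 * y \<le> b * y" using y0 b1 by (intro mult_right_mono) auto
    then have "y \<le> b * y" by simp
    then have "real N * ((1 + b * y) - (1 + y)) * (1 + y) ^ (N - 1) \<le> (1 + b * y) ^ N - (1 + y) ^ N"
      using pow_diff_bounds(2)[of "1 + y" "1 + b * y" N] y0 by simp
    then show ?thesis unfolding D_def by (simp add: algebra_simps)
  qed
  have W0: "0 \<le> Wf q N y" unfolding Wf_def using b1 y0 qj q unfolding b_def
    by (intro sum_nonneg mult_nonneg_nonneg zero_le_power divide_nonneg_nonneg add_nonneg_nonneg)
       (auto intro: less_imp_le)
  have E2: "Ef q N x \<le> D / 2"
  proof -
    have "Ef q N x \<le> real N * y * (1 + y) ^ (N - 1) * Wf q N y" using Emono Ebound by simp
    also have "\<dots> \<le> real N * y * (1 + y) ^ (N - 1) * ((b - 1) / 2)"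
      using Wmono C1 y0 unfolding b_def by (intro mult_left_mono) auto
    also have "\<dots> = D / 2" unfolding D_def by simp
    finally show ?thesis .
  qed
  have xN: "(1 + x) ^ N \<le> (1 + y) ^ N" using x by (intro power_mono) auto
  show "(1 + x) ^ N + Ef q N x \<le> (1 + beta q * y) ^ N"
    using xN E2 Dle D0 unfolding b_def by linarith
  have P2: "2 ^ N * x ^ N \<le> D / 2"
  proof -
    have A: "(2 * y) ^ (N - 1) \<le> ((b - 1) / 4) * (1 + y) ^ (N - 1)"
    proof -
      have "(2 * y) ^ (N - 1) \<le> ((2 * q / (1 + q)) * (1 + y)) ^ (N - 1)"
      proof (intro power_mono)
        have "2 * y * (1 + q) \<le> 2 * q * (1 + y)" using x by (simp add: algebra_simps)
        then show "2 * y \<le> 2 * q / (1 + q) * (1 + y)" using q by (simp add: field_simps)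
      qed (use y0 in auto)
      also have "\<dots> = (2 * q / (1 + q)) ^ (N - 1) * (1 + y) ^ (N - 1)" by (rule power_mult_distrib)
      also have "\<dots> \<le> ((b - 1) / 4) * (1 + y) ^ (N - 1)"
        using C2 y0 unfolding b_def by (intro mult_right_mono) auto
      finally show ?thesis .
    qed
    have "2 ^ N * x ^ N \<le> 2 ^ N * y ^ N" using x by (intro mult_left_mono power_mono) auto
    also have "2 ^ N * y ^ N = 2 * y * (2 * y) ^ (N - 1)"
      using N by (cases N) (auto simp: power_mult_distrib)
    also have "\<dots> \<le> 2 * y * (((b - 1) / 4) * (1 + y) ^ (N - 1))"
      using A y0 by (intro mult_left_mono) auto
    also have "\<dots> = (b - 1) * y * (1 + y) ^ (N - 1) / 2" by simp
    also have "\<dots> \<le> D / 2"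
    proof -
      have nn: "0 \<le> (b - 1) * y * (1 + y) ^ (N - 1)" using b1 y0 by simp
      have "1 * ((b - 1) * y * (1 + y) ^ (N - 1)) \<le> real N * ((b - 1) * y * (1 + y) ^ (N - 1))"
        using N nn by (intro mult_right_mono) auto
      then show ?thesis unfolding D_def by (simp add: mult_ac)
    qed
    finally show ?thesis .
  qed
  have "1 \<le> (1 + y) ^ N" using y0 by (simp add: one_le_power)
  then show "1 + 2 ^ N * x ^ N + Ef q N x \<le> (1 + beta q * y) ^ N"
    using P2 E2 Dle unfolding b_def by linarith
qed

lemma exp_identity:
  fixes q :: real
  assumes "s \<le> N" "t \<le> N"
  shows "q ^ (s * (N - t)) * q ^ (N * t) = q ^ (N * s) * q ^ ((N - s) * t)"
proof -
  have "int (s * (N - t) + N * t) = int (N * s + (N - s) * t)"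
    using assms by (simp add: of_nat_diff algebra_simps)
  then have "s * (N - t) + N * t = N * s + (N - s) * t" by linarith
  then show ?thesis by (simp add: power_add[symmetric])
qed

lemma upper_N:
  fixes q :: real and \<Phi> :: "nat \<Rightarrow> real"
  assumes q: "0 < q" "q < 1" and N: "1 \<le> N"
    and H0: "\<Phi> 0 = 1" and H1: "\<And>t. q ^ (N * t) \<le> \<Phi> t"
    and H2: "\<And>s. 1 \<le> s \<Longrightarrow> s \<le> N \<Longrightarrow>
        \<Phi> s + (1 - q ^ s) * \<Phi> N \<le> (\<Sum>t\<le>N. real (N choose t) * (1 - q ^ s) ^ t * q ^ (s * (N - t)) * \<Phi> t)"
    and C1: "Wf q N q \<le> (beta q - 1) / 2" and C2: "(2 * q / (1 + q)) ^ (N - 1) \<le> (beta q - 1) / 4"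
  shows "\<Phi> N / (q ^ (N * N) * 2 ^ N) *
           (1 - q ^ N - (\<Sum>t\<in>{1..N-1}. real (N choose t) * ((1 + beta q * q ^ (N - t)) ^ N - 1)) / 2 ^ N)
         \<le> 1 + (\<Sum>t\<in>{1..N-1}. real (N choose t) * ((1 + beta q * q ^ (N - t)) ^ N - 1)) / 2 ^ N"
proof -
  define b where "b = beta q"
  have b1: "1 < b" unfolding b_def using beta_ge q by simp
  define G where "G t = \<Phi> t / q ^ (N * t)" for t
  have qp: "0 < q ^ n" for n using q by simp
  have PhiG: "\<Phi> t = q ^ (N * t) * G t" for t unfolding G_def using qp[of "N * t"] q by simp
  have G1: "1 \<le> G t" for t unfolding G_def using H1[of t] qp[of "N * t"] by (simp add: field_simps)
  have Phi0: "0 \<le> \<Phi> t" for t using qp[of "N * t"] H1[of t] by linarith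
  define x where "x s = (1 - q ^ s) * q ^ (N - s)" for s
  define K where "K = {1..N-1}"
  define F where "F t = (1 + b * q ^ (N - t)) ^ N" for t
  define RR where "RR = G N / 2 ^ N"
  define S where "S = (\<Sum>t\<in>K. real (N choose t) * (F t - 1))"
  have finK: "finite K" unfolding K_def by simp
  have RR0: "0 \<le> RR" unfolding RR_def using G1[of N] by simp
  have F1: "1 \<le> F t" for t unfolding F_def using b1 q by (intro one_le_power) auto
  have x0: "0 \<le> x s" "x s \<le> q ^ (N - s)" if "s \<le> N" for s
    unfolding x_def using q qp[of s] by (auto intro!: mult_nonneg_nonneg simp: power_le_one mult_le_cancel_right1)
  have rew: "(\<Sum>t\<le>N. real (N choose t) * (1 - q ^ s) ^ t * q ^ (s * (N - t)) * \<Phi> t)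
      = q ^ (N * s) * (\<Sum>t\<le>N. real (N choose t) * x s ^ t * G t)" if "s \<le> N" for s
    unfolding sum_distrib_left
  proof (intro sum.cong refl)
    fix t assume "t \<in> {..N}"
    then have t: "t \<le> N" by simp
    have h: "q ^ (s * (N - t)) * \<Phi> t = q ^ (N * s) * (q ^ ((N - s) * t) * G t)"
      unfolding PhiG using exp_identity[OF that t, of q] by (simp add: mult.assoc[symmetric])
    have e: "x s ^ t = (1 - q ^ s) ^ t * q ^ ((N - s) * t)"
      unfolding x_def by (simp add: power_mult_distrib power_mult)
    have "real (N choose t) * (1 - q ^ s) ^ t * q ^ (s * (N - t)) * \<Phi> t
        = real (N choose t) * (1 - q ^ s) ^ t * (q ^ (s * (N - t)) * \<Phi> t)" by (simp only: mult.assoc)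
    also have "\<dots> = real (N choose t) * (1 - q ^ s) ^ t * (q ^ (N * s) * (q ^ ((N - s) * t) * G t))"
      by (subst h) (rule refl)
    also have "\<dots> = q ^ (N * s) * (real (N choose t) * x s ^ t * G t)"
      unfolding e by (simp only: mult_ac)
    finally show "real (N choose t) * (1 - q ^ s) ^ t * q ^ (s * (N - t)) * \<Phi> t
        = q ^ (N * s) * (real (N choose t) * x s ^ t * G t)" .
  qed
  have split: "(\<Sum>t\<le>N. f t) = f 0 + (\<Sum>t\<in>K. f t) + f N" for f :: "nat \<Rightarrow> real"
  proof -
    have "{..N} = insert 0 (insert N K)" unfolding K_def using N by auto
    moreover have "0 \<notin> insert N K" "N \<notin> K" unfolding K_def using N by auto
    ultimately show ?thesis using finK by (simp add: add.commute add.left_commute)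
  qed
  have Gsys: "G s \<le> (1 + x s ^ N * G N) + (\<Sum>t\<in>K. (real (N choose t) * x s ^ t) * G t)" if s: "s \<in> K" for s
  proof -
    have s1: "1 \<le> s" "s \<le> N" using s N unfolding K_def by auto
    have "0 \<le> (1 - q ^ s) * \<Phi> N"
    proof (rule mult_nonneg_nonneg)
      show "0 \<le> 1 - q ^ s" using q by (simp add: power_le_one)
      show "0 \<le> \<Phi> N" using H1[of N] qp[of "N * N"] by simp
    qed
    then have "\<Phi> s \<le> \<Phi> s + (1 - q ^ s) * \<Phi> N" by simp
    also have "\<dots> \<le> q ^ (N * s) * (\<Sum>t\<le>N. real (N choose t) * x s ^ t * G t)"
      using H2[OF s1] rew[OF s1(2)] by simp
    finally have "q ^ (N * s) * G s \<le> q ^ (N * s) * (\<Sum>t\<le>N. real (N choose t) * x s ^ t * G t)"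
      unfolding PhiG .
    then have "G s \<le> (\<Sum>t\<le>N. real (N choose t) * x s ^ t * G t)" using qp[of "N * s"] by simp
    also have "\<dots> = (1 + x s ^ N * G N) + (\<Sum>t\<in>K. (real (N choose t) * x s ^ t) * G t)"
      unfolding split using H0 PhiG[of 0] by simp
    finally show ?thesis .
  qed
  define H where "H t = F t + RR * (F t - 1)" for t
  have Hsup: "(1 + x s ^ N * G N) + (\<Sum>t\<in>K. (real (N choose t) * x s ^ t) * H t) \<le> H s" if s: "s \<in> K" for s
  proof -
    have s1: "1 \<le> s" "s \<le> N - 1" "s \<le> N" using s N unfolding K_def by auto
    have y: "q ^ (N - s) \<le> q" using q s1 power_decreasing[of 1 "N - s" q] by auto
    have xs: "0 \<le> x s" "x s \<le> q ^ (N - s)" using x0[OF s1(3)] by auto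
    have ins: "{1..N} = insert N K" unfolding K_def using N by auto
    have NK: "N \<notin> K" unfolding K_def using N by auto
    have sF: "(\<Sum>t\<in>K. real (N choose t) * x s ^ t * F t) \<le> (1 + x s) ^ N - 1 + Ef q N (x s)"
    proof -
      have "(\<Sum>t\<in>K. real (N choose t) * x s ^ t * F t) \<le> (\<Sum>t\<in>{1..N}. real (N choose t) * x s ^ t * F t)"
        unfolding ins using finK NK xs F1[of N] by (simp add: order_trans[OF _ F1])
      also have "\<dots> = (1 + x s) ^ N - 1 + Ef q N (x s)" unfolding F_def b_def by (rule sumF_identity)
      finally show ?thesis .
    qed
    have sF1: "(\<Sum>t\<in>K. real (N choose t) * x s ^ t * (F t - 1)) \<le> Ef q N (x s)"
    proof -
      have "(\<Sum>t\<in>K. real (N choose t) * x s ^ t * (F t - 1)) \<le> (\<Sum>t\<in>{1..N}. real (N choose t) * x s ^ t * (F t - 1))"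
        unfolding ins using finK NK xs F1[of N] by simp
      also have "\<dots> = Ef q N (x s)" unfolding F_def b_def by (rule sumF1_identity)
      finally show ?thesis .
    qed
    have SI1: "(1 + x s) ^ N + Ef q N (x s) \<le> F s"
      unfolding F_def b_def by (rule super_ineq(1)[OF q N C1 C2 xs y])
    have SI2: "1 + 2 ^ N * x s ^ N + Ef q N (x s) \<le> F s"
      unfolding F_def b_def by (rule super_ineq(2)[OF q N C1 C2 xs y])
    have "(\<Sum>t\<in>K. (real (N choose t) * x s ^ t) * H t)
        = (\<Sum>t\<in>K. real (N choose t) * x s ^ t * F t) + RR * (\<Sum>t\<in>K. real (N choose t) * x s ^ t * (F t - 1))"
    proof -
      have "(\<Sum>t\<in>K. (real (N choose t) * x s ^ t) * H t)
          = (\<Sum>t\<in>K. real (N choose t) * x s ^ t * F t + RR * (real (N choose t) * x s ^ t * (F t - 1)))"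
        unfolding H_def by (intro sum.cong refl) (simp add: algebra_simps)
      also have "\<dots> = (\<Sum>t\<in>K. real (N choose t) * x s ^ t * F t) + RR * (\<Sum>t\<in>K. real (N choose t) * x s ^ t * (F t - 1))"
        by (simp add: sum.distrib sum_distrib_left)
      finally show ?thesis .
    qed
    also have "\<dots> \<le> ((1 + x s) ^ N - 1 + Ef q N (x s)) + RR * Ef q N (x s)"
      using sF sF1 RR0 by (intro add_mono mult_left_mono) auto
    finally have A: "(\<Sum>t\<in>K. (real (N choose t) * x s ^ t) * H t) \<le> (1 + x s) ^ N - 1 + Ef q N (x s) + RR * Ef q N (x s)" .
    have GN: "x s ^ N * G N = RR * (2 ^ N * x s ^ N)" unfolding RR_def by simp
    have "RR * (2 ^ N * x s ^ N + Ef q N (x s)) \<le> RR * (F s - 1)"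
      using SI2 RR0 by (intro mult_left_mono) auto
    then show ?thesis using A SI1 unfolding GN H_def by (simp add: algebra_simps)
  qed
  have GH: "G t \<le> H t" if "t \<in> K" for t
  proof (rule comparison[OF finK Gsys Hsup _ _ _ that])
    fix s t assume "s \<in> K" "t \<in> K"
    then show "0 \<le> real (N choose t) * x s ^ t" using x0[of s] unfolding K_def by auto
  next
    fix s show "0 < 1 + x s ^ N * G N" if "s \<in> K"
      using x0[of s] G1[of N] that unfolding K_def by (auto intro: add_pos_nonneg)
  next
    fix s show "0 < H s" if "s \<in> K"
      using F1[of s] RR0 unfolding H_def by (auto intro: add_pos_nonneg)
  qed
  have fin1: "(1 - q ^ N) * \<Phi> N \<le> q ^ (N * N) * (\<Sum>t<N. real (N choose t) * G t)"
  proof -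
    have "\<Phi> N + (1 - q ^ N) * \<Phi> N \<le> (\<Sum>t\<le>N. real (N choose t) * (1 - q ^ N) ^ t * q ^ (N * (N - t)) * \<Phi> t)"
      using H2[OF N order_refl] .
    also have "\<dots> = (\<Sum>t<N. real (N choose t) * (1 - q ^ N) ^ t * q ^ (N * (N - t)) * \<Phi> t) + (1 - q ^ N) ^ N * \<Phi> N"
      by (simp add: lessThan_Suc_atMost[symmetric])
    also have "\<dots> \<le> (\<Sum>t<N. real (N choose t) * q ^ (N * (N - t)) * \<Phi> t) + 1 * \<Phi> N"
    proof (rule add_mono)
      show "(\<Sum>t<N. real (N choose t) * (1 - q ^ N) ^ t * q ^ (N * (N - t)) * \<Phi> t)
          \<le> (\<Sum>t<N. real (N choose t) * q ^ (N * (N - t)) * \<Phi> t)"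
      proof (rule sum_mono)
        fix t
        have a: "(1 - q ^ N) ^ t \<le> 1" using q qp[of N] by (intro power_le_one) (auto simp: power_le_one)
        have b: "0 \<le> real (N choose t) * q ^ (N * (N - t)) * \<Phi> t"
          using H1[of t] qp[of "N * t"] qp[of "N * (N - t)"] by simp
        have "real (N choose t) * (1 - q ^ N) ^ t * q ^ (N * (N - t)) * \<Phi> t
            = (1 - q ^ N) ^ t * (real (N choose t) * q ^ (N * (N - t)) * \<Phi> t)" by (simp only: mult_ac)
        also have "\<dots> \<le> 1 * (real (N choose t) * q ^ (N * (N - t)) * \<Phi> t)"
          using a b by (rule mult_right_mono)
        finally show "real (N choose t) * (1 - q ^ N) ^ t * q ^ (N * (N - t)) * \<Phi> t
            \<le> real (N choose t) * q ^ (N * (N - t)) * \<Phi> t" by simp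
      qed
      show "(1 - q ^ N) ^ N * \<Phi> N \<le> 1 * \<Phi> N"
        using q qp[of N] Phi0[of N]
        by (intro mult_right_mono power_le_one) (auto simp: power_le_one)
    qed
    also have "(\<Sum>t<N. real (N choose t) * q ^ (N * (N - t)) * \<Phi> t) = q ^ (N * N) * (\<Sum>t<N. real (N choose t) * G t)"
      unfolding sum_distrib_left
    proof (intro sum.cong refl)
      fix t assume "t \<in> {..<N}"
      then have "N * (N - t) + N * t = N * N" by (simp add: diff_mult_distrib2)
      then have "q ^ (N * (N - t)) * q ^ (N * t) = q ^ (N * N)" by (simp add: power_add[symmetric])
      then show "real (N choose t) * q ^ (N * (N - t)) * \<Phi> t = q ^ (N * N) * (real (N choose t) * G t)"
        unfolding PhiG by (simp add: mult_ac)
    qed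
    finally show ?thesis by simp
  qed
  have fin2: "(\<Sum>t<N. real (N choose t) * G t) \<le> 2 ^ N + S * (1 + RR)"
  proof -
    have "{..<N} = insert 0 K" unfolding K_def using N by auto
    then have "(\<Sum>t<N. real (N choose t) * G t) = G 0 + (\<Sum>t\<in>K. real (N choose t) * G t)"
      using finK unfolding K_def by simp
    also have "\<dots> \<le> 1 + (\<Sum>t\<in>K. real (N choose t) * H t)"
      using H0 PhiG[of 0] GH by (intro add_mono sum_mono mult_left_mono) auto
    also have "(\<Sum>t\<in>K. real (N choose t) * H t) = (\<Sum>t\<in>K. real (N choose t)) + S + RR * S"
    proof -
      have "(\<Sum>t\<in>K. real (N choose t) * H t)
          = (\<Sum>t\<in>K. real (N choose t) + real (N choose t) * (F t - 1) + RR * (real (N choose t) * (F t - 1)))"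
        unfolding H_def by (intro sum.cong refl) (simp add: algebra_simps)
      also have "\<dots> = (\<Sum>t\<in>K. real (N choose t)) + S + RR * S"
        unfolding S_def by (simp add: sum.distrib sum_distrib_left)
      finally show ?thesis .
    qed
    also have "(\<Sum>t\<in>K. real (N choose t)) \<le> 2 ^ N - 1"
    proof -
      have "(\<Sum>t\<in>K. real (N choose t)) \<le> (\<Sum>t\<in>{1..N}. real (N choose t))"
        unfolding K_def by (intro sum_mono2) auto
      also have "\<dots> = (\<Sum>t\<in>{1..N}. real (N choose t) * 1 ^ t * 1 ^ (N - t))" by simp
      also have "\<dots> = 2 ^ N - 1" unfolding sum_binom_shift by simp
      finally show ?thesis .
    qed
    finally show ?thesis by (simp add: algebra_simps)
  qed
  have key: "(1 - q ^ N) * \<Phi> N \<le> q ^ (N * N) * (2 ^ N + S * (1 + RR))"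
    using fin1 fin2 qp[of "N * N"] by (meson mult_left_mono order_trans less_imp_le)
  have PhiR: "\<Phi> N = q ^ (N * N) * 2 ^ N * RR" unfolding RR_def PhiG[of N] by simp
  have "(1 - q ^ N) * RR \<le> 1 + S / 2 ^ N * (1 + RR)"
  proof -
    have "q ^ (N * N) * 2 ^ N * ((1 - q ^ N) * RR) \<le> q ^ (N * N) * 2 ^ N * (1 + S / 2 ^ N * (1 + RR))"
    proof -
      have eq: "q ^ (N * N) * 2 ^ N * (1 + S / 2 ^ N * (1 + RR)) = q ^ (N * N) * (2 ^ N + S * (1 + RR))"
        by (simp add: field_simps)
      have eq2: "q ^ (N * N) * 2 ^ N * ((1 - q ^ N) * RR) = (1 - q ^ N) * \<Phi> N"
        unfolding PhiR by (simp only: mult_ac)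
      show ?thesis unfolding eq eq2 by (rule key)
    qed
    then show ?thesis using qp[of "N * N"] by (simp add: mult_le_cancel_left_pos)
  qed
  then have fin: "RR * ((1 - q ^ N) - S / 2 ^ N) \<le> 1 + S / 2 ^ N"
  proof -
    assume h: "(1 - q ^ N) * RR \<le> 1 + S / 2 ^ N * (1 + RR)"
    have "RR * ((1 - q ^ N) - S / 2 ^ N) = (1 - q ^ N) * RR - S / 2 ^ N * RR" by (simp add: algebra_simps)
    also have "\<dots> \<le> 1 + S / 2 ^ N * (1 + RR) - S / 2 ^ N * RR" using h by linarith
    also have "\<dots> = 1 + S / 2 ^ N" by (simp add: distrib_left)
    finally show ?thesis .
  qed
  have RRe: "RR = \<Phi> N / (q ^ (N * N) * 2 ^ N)" unfolding PhiR using qp[of "N * N"] q by simp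
  have Seq: "(\<Sum>t\<in>{1..N-1}. real (N choose t) * ((1 + beta q * q ^ (N - t)) ^ N - 1)) = S"
    unfolding S_def F_def b_def K_def ..
  show ?thesis unfolding Seq RRe[symmetric] using fin by (simp only: diff_diff_eq)
qed

lemma exists_zd:
  fixes c b :: real
  assumes c: "0 < c" "c < 1" and b: "0 \<le> b"
  shows "\<exists>z \<delta>. 0 < z \<and> z < 1 \<and> 0 < \<delta> \<and> c * (1 + b * z) / (z powr \<delta>) < 1"
proof -
  define z where "z = min (1/2) ((1/c - 1) / (2 * (b + 1)))"
  have c1: "0 < 1/c - 1" using c by (simp add: field_simps)
  have z0: "0 < z" "z < 1" unfolding z_def using c1 b by auto
  have bz: "b * z \<le> (1/c - 1) / 2"
  proof -
    have "b * z \<le> b * ((1/c - 1) / (2 * (b + 1)))" using b unfolding z_def by (intro mult_left_mono) auto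
    also have "\<dots> = (b / (b + 1)) * ((1/c - 1) / 2)" using b by (simp add: field_simps)
    also have "\<dots> \<le> 1 * ((1/c - 1) / 2)" using b c1 by (intro mult_right_mono) auto
    finally show ?thesis by simp
  qed
  define d where "d = c * (1 + b * z)"
  have d0: "0 < d" unfolding d_def using c b z0 by (simp add: add_pos_nonneg)
  have d1: "d < 1"
  proof -
    have "d \<le> c * (1 + (1/c - 1) / 2)" unfolding d_def using bz c by (intro mult_left_mono) auto
    also have "\<dots> = (c + 1) / 2" using c by (simp add: field_simps)
    also have "\<dots> < 1" using c by simp
    finally show ?thesis .
  qed
  define \<delta> where "\<delta> = ln d / (2 * ln z)"
  have lnz: "ln z < 0" using z0 by simp
  have lnd: "ln d < 0" using d0 d1 by simp
  have \<delta>0: "0 < \<delta>" unfolding \<delta>_def using lnz lnd by (simp add: divide_neg_neg)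
  have "z powr \<delta> = exp (ln d / 2)" unfolding powr_def \<delta>_def using z0 lnz by simp
  also have "\<dots> > exp (ln d)" using lnd by simp
  also have "exp (ln d) = d" using d0 by simp
  finally have "d < z powr \<delta>" .
  moreover have "0 < z powr \<delta>" using z0 by simp
  ultimately have "d / z powr \<delta> < 1" by (simp add: divide_less_eq)
  then show ?thesis using z0 \<delta>0 unfolding d_def by blast
qed

lemma split_sum:
  fixes T :: "nat \<Rightarrow> real" and z \<delta> w A B :: real
  assumes z: "0 < z" "z \<le> 1" and \<delta>: "0 < \<delta>" and w: "0 \<le> w" and AB: "0 \<le> A" "0 \<le> B"
    and T1: "\<And>j. j \<le> N \<Longrightarrow> \<delta> * real N \<le> real j \<Longrightarrow> T j \<le> real (N choose j) * w ^ j * A"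
    and T2: "\<And>j. j \<le> N \<Longrightarrow> real j < \<delta> * real N \<Longrightarrow> T j \<le> real (N choose j) * w ^ j * B"
  shows "(\<Sum>j\<le>N. T j) \<le> A * (1 + w) ^ N + B * (1 + w * z) ^ N / (z powr \<delta>) ^ N"
proof -
  define \<zeta> where "\<zeta> = z powr \<delta>"
  have \<zeta>0: "0 < \<zeta>" unfolding \<zeta>_def using z by simp
  have key: "T j \<le> real (N choose j) * w ^ j * A + real (N choose j) * (w * z) ^ j * B / \<zeta> ^ N"
    if j: "j \<le> N" for j
  proof (cases "\<delta> * real N \<le> real j")
    case True
    have "0 \<le> real (N choose j) * (w * z) ^ j * B / \<zeta> ^ N" using w z AB \<zeta>0 by simp
    then show ?thesis using T1[OF j True] by linarith
  next
    case False
    then have lt: "real j < \<delta> * real N" by simp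
    have zj: "\<zeta> ^ N \<le> z ^ j"
    proof -
      have "\<zeta> ^ N = z powr (\<delta> * real N)" unfolding \<zeta>_def using z
        by (simp add: powr_realpow[symmetric] powr_powr)
      also have "\<dots> \<le> z powr (real j)" using lt z by (intro powr_mono') auto
      also have "\<dots> = z ^ j" using z by (simp add: powr_realpow)
      finally show ?thesis .
    qed
    have "real (N choose j) * w ^ j * B \<le> real (N choose j) * w ^ j * B * (z ^ j / \<zeta> ^ N)"
    proof -
      have "1 \<le> z ^ j / \<zeta> ^ N" using zj \<zeta>0 by simp
      moreover have "0 \<le> real (N choose j) * w ^ j * B" using w AB by simp
      ultimately show ?thesis by (metis mult.right_neutral mult_left_mono)
    qed
    also have "\<dots> = real (N choose j) * (w * z) ^ j * B / \<zeta> ^ N" by (simp add: power_mult_distrib)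
    finally have "T j \<le> real (N choose j) * (w * z) ^ j * B / \<zeta> ^ N" using T2[OF j lt] by linarith
    moreover have "0 \<le> real (N choose j) * w ^ j * A" using w AB by simp
    ultimately show ?thesis by linarith
  qed
  have "(\<Sum>j\<le>N. T j) \<le> (\<Sum>j\<le>N. real (N choose j) * w ^ j * A + real (N choose j) * (w * z) ^ j * B / \<zeta> ^ N)"
    by (intro sum_mono key) auto
  also have "\<dots> = A * (\<Sum>j\<le>N. real (N choose j) * w ^ j * 1 ^ (N - j))
      + B / \<zeta> ^ N * (\<Sum>j\<le>N. real (N choose j) * (w * z) ^ j * 1 ^ (N - j))"
    by (simp add: sum.distrib sum_distrib_left mult_ac)
  also have "\<dots> = A * (w + 1) ^ N + B / \<zeta> ^ N * (w * z + 1) ^ N"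
    by (simp only: binomial_ring)
  finally show ?thesis unfolding \<zeta>_def by (simp add: add.commute mult_ac)
qed

lemma pow_le_exp:
  fixes x :: real assumes "0 \<le> x"
  shows "(1 + x) ^ N \<le> exp (real N * x)"
proof -
  have "(1 + x) ^ N \<le> exp x ^ N" using assms by (intro power_mono) (auto simp: exp_ge_add_one_self)
  also have "\<dots> = exp (real N * x)" by (simp add: exp_of_nat_mult)
  finally show ?thesis .
qed

lemma lim_n_pow: fixes \<kappa> :: real assumes "0 \<le> \<kappa>" "\<kappa> < 1"
  shows "(\<lambda>N. real N * \<kappa> ^ N) \<longlonglongrightarrow> 0"
  using powser_times_n_limit_0[of \<kappa>] assms by simp

lemma lim_exp_n_pow: fixes \<kappa> c :: real assumes "0 \<le> \<kappa>" "\<kappa> < 1"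
  shows "(\<lambda>N. exp (real N * (c * \<kappa> ^ N))) \<longlonglongrightarrow> 1"
proof -
  have "(\<lambda>N. c * (real N * \<kappa> ^ N)) \<longlonglongrightarrow> c * 0" by (intro tendsto_mult tendsto_const lim_n_pow assms)
  then have "(\<lambda>N. exp (c * (real N * \<kappa> ^ N))) \<longlonglongrightarrow> exp (c * 0)" by (rule tendsto_exp)
  then show ?thesis by (simp add: mult_ac)
qed

lemma lim_sigma:
  fixes q :: real
  assumes q: "0 < q" "q < 1"
  shows "(\<lambda>N. (\<Sum>t\<in>{1..N-1}. real (N choose t) * ((1 + beta q * q ^ (N - t)) ^ N - 1)) / 2 ^ N) \<longlonglongrightarrow> 0"
proof -
  define b where "b = beta q"
  have bq: "b * q = (1 + q) / 2" unfolding b_def beta_def using q by simp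
  have b0: "0 < b" unfolding b_def using beta_ge[OF q] by simp
  define c where "c = (1 + b * q) / 2"
  have c: "0 < c" "c < 1" unfolding c_def bq using q by (auto simp: field_simps)
  obtain z \<delta> where zd: "0 < z" "z < 1" "0 < \<delta>" "c * (1 + 1 * z) / (z powr \<delta>) < 1"
    using exists_zd[OF c, of 1] by auto
  define \<kappa> where "\<kappa> = q powr \<delta>"
  have \<kappa>: "0 < \<kappa>" "\<kappa> < 1" unfolding \<kappa>_def using q zd by (auto simp: powr01_less_one)
  define \<zeta> where "\<zeta> = z powr \<delta>"
  have \<zeta>: "0 < \<zeta>" unfolding \<zeta>_def using zd by simp
  define r where "r = c * (1 + z) / \<zeta>"
  have r: "0 \<le> r" "r < 1" unfolding r_def using zd c \<zeta> by (auto simp: \<zeta>_def)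
  define s where "s N = (\<Sum>t\<in>{1..N-1}. real (N choose t) * ((1 + b * q ^ (N - t)) ^ N - 1)) / 2 ^ N" for N :: nat
  define U where "U N = (exp (real N * (b * \<kappa> ^ N)) - 1) + r ^ N" for N :: nat
  have qj: "q ^ j \<le> \<kappa> ^ N" if "\<delta> * real N \<le> real j" for j N :: nat
  proof -
    have "q ^ j = q powr real j" using q by (simp add: powr_realpow)
    also have "\<dots> \<le> q powr (\<delta> * real N)" using that q by (intro powr_mono') auto
    also have "\<dots> = \<kappa> ^ N" unfolding \<kappa>_def using q by (simp add: powr_realpow[symmetric] powr_powr)
    finally show ?thesis .
  qed
  have s0: "0 \<le> s N" for N
    unfolding s_def using q b0 by (intro divide_nonneg_nonneg sum_nonneg mult_nonneg_nonneg)
      (auto simp: one_le_power)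
  have sU: "s N \<le> U N" for N
  proof -
    define g where "g t = (if 1 \<le> t \<and> t \<le> N - 1 then real (N choose t) * ((1 + b * q ^ (N - t)) ^ N - 1) else 0)" for t
    define A where "A = (1 + b * \<kappa> ^ N) ^ N - 1"
    define B where "B = (1 + b * q) ^ N"
    have A0: "0 \<le> A" unfolding A_def using b0 \<kappa> by (simp add: one_le_power)
    have B0: "0 \<le> B" unfolding B_def using b0 q by simp
    have "(\<Sum>t\<in>{1..N-1}. real (N choose t) * ((1 + b * q ^ (N - t)) ^ N - 1)) = (\<Sum>t\<in>{0..N}. g t)"
    proof -
      have e: "{t\<in>{0..N}. 1 \<le> t \<and> t \<le> N - 1} = {1..N-1}" by auto
      have "(\<Sum>t\<in>{0..N}. g t) = (\<Sum>t\<in>{t\<in>{0..N}. 1 \<le> t \<and> t \<le> N - 1}. real (N choose t) * ((1 + b * q ^ (N - t)) ^ N - 1))"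
        unfolding g_def by (rule sum.inter_filter[symmetric]) simp
      then show ?thesis unfolding e by simp
    qed
    also have "\<dots> = (\<Sum>j\<in>{0..N}. g (N + 0 - j))" by (rule sum.atLeastAtMost_rev)
    also have "\<dots> = (\<Sum>j\<le>N. g (N - j))" by (simp add: atMost_atLeast0)
    also have "\<dots> \<le> A * (1 + 1) ^ N + B * (1 + 1 * z) ^ N / (z powr \<delta>) ^ N"
    proof (rule split_sum[where w=1])
      fix j assume j: "j \<le> N" "\<delta> * real N \<le> real j"
      show "g (N - j) \<le> real (N choose j) * 1 ^ j * A"
      proof (cases "1 \<le> N - j \<and> N - j \<le> N - 1")
        case True
        have "(1 + b * q ^ j) ^ N \<le> (1 + b * \<kappa> ^ N) ^ N"
          using qj[OF j(2)] b0 q by (intro power_mono) (auto intro: mult_left_mono)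
        then show ?thesis using True j unfolding g_def A_def
          by (simp add: binomial_symmetric[OF j(1)] mult_left_mono)
      qed (use A0 in \<open>auto simp: g_def\<close>)
    next
      fix j assume j: "j \<le> N" "real j < \<delta> * real N"
      show "g (N - j) \<le> real (N choose j) * 1 ^ j * B"
      proof (cases "1 \<le> N - j \<and> N - j \<le> N - 1")
        case True
        then have j1: "1 \<le> j" by auto
        have "q ^ j \<le> q" using q j1 power_decreasing[of 1 j q] by auto
        then have "(1 + b * q ^ j) ^ N \<le> (1 + b * q) ^ N"
          using b0 q by (intro power_mono) (auto intro: mult_left_mono)
        then have "(1 + b * q ^ j) ^ N - 1 \<le> (1 + b * q) ^ N" by linarith
        then show ?thesis using True j unfolding g_def B_def
          by (simp add: binomial_symmetric[OF j(1)] mult_left_mono)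
      qed (use B0 in \<open>auto simp: g_def\<close>)
    qed (use zd A0 B0 in auto)
    finally have S: "(\<Sum>t\<in>{1..N-1}. real (N choose t) * ((1 + b * q ^ (N - t)) ^ N - 1))
        \<le> A * 2 ^ N + B * (1 + z) ^ N / \<zeta> ^ N" unfolding \<zeta>_def by simp
    have "B * (1 + z) ^ N / \<zeta> ^ N / 2 ^ N = r ^ N"
      by (simp add: r_def c_def B_def power_divide power_mult_distrib divide_divide_eq_left mult.commute)
    have "s N \<le> (A * 2 ^ N + B * (1 + z) ^ N / \<zeta> ^ N) / 2 ^ N"
      unfolding s_def by (rule divide_right_mono[OF S]) simp
    also have "\<dots> = A + B * (1 + z) ^ N / \<zeta> ^ N / 2 ^ N" by (simp add: add_divide_distrib)
    finally have "s N \<le> A + r ^ N" using \<open>B * (1 + z) ^ N / \<zeta> ^ N / 2 ^ N = r ^ N\<close> by simp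
    also have "A \<le> exp (real N * (b * \<kappa> ^ N)) - 1"
      unfolding A_def using pow_le_exp[of "b * \<kappa> ^ N" N] b0 \<kappa> by simp
    finally show ?thesis unfolding U_def by simp
  qed
  have "U \<longlonglongrightarrow> (1 - 1) + 0" unfolding U_def
    by (intro tendsto_add tendsto_diff lim_exp_n_pow LIMSEQ_power_zero tendsto_const) (use \<kappa> r in auto)
  then have "U \<longlonglongrightarrow> 0" by simp
  then have "s \<longlonglongrightarrow> 0"
    by (intro tendsto_sandwich[of "\<lambda>_. 0" s _ U]) (auto simp: s0 sU)
  then show ?thesis unfolding s_def b_def .
qed

lemma pow_pred: fixes x :: real assumes "x \<noteq> 0" "1 \<le> N" shows "x ^ (N - 1) = x ^ N / x"
  using assms by (cases N) auto

lemma lim_W: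
  fixes q :: real
  assumes q: "0 < q" "q < 1"
  shows "(\<lambda>N. Wf q N q) \<longlonglongrightarrow> 0"
proof -
  define b where "b = beta q"
  have b0: "1 < b" unfolding b_def using beta_ge[OF q] by simp
  define c where "c = 2 * q / (1 + q)"
  have c: "0 < c" "c < 1" unfolding c_def using q by (auto simp: field_simps)
  obtain z \<delta> where zd: "0 < z" "z < 1" "0 < \<delta>" "c * (1 + b * z) / (z powr \<delta>) < 1"
    using exists_zd[OF c, of b] b0 by auto
  define \<kappa> where "\<kappa> = q powr \<delta>"
  have \<kappa>: "0 < \<kappa>" "\<kappa> < 1" unfolding \<kappa>_def using q zd by (auto simp: powr01_less_one)
  define \<zeta> where "\<zeta> = z powr \<delta>"
  have \<zeta>: "0 < \<zeta>" unfolding \<zeta>_def using zd by simp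
  define r where "r = c * (1 + b * z) / \<zeta>"
  have r: "0 \<le> r" "r < 1" unfolding r_def using zd c \<zeta> b0 by (auto simp: \<zeta>_def)
  define \<rho> where "\<rho> = q / (1 + q)"
  have \<rho>0: "0 < \<rho>" unfolding \<rho>_def using q by simp
  have \<rho>b: "\<rho> * (1 + b) < 1"
  proof -
    have "0 < q * 2 + q * (q * 2)" using q by (intro add_pos_pos mult_pos_pos) auto
    then have q1: "1 + q \<noteq> 0" "q \<noteq> 0" "q * 2 + q * (q * 2) \<noteq> 0" using q by auto
    have "\<rho> * b = 1 / 2" unfolding \<rho>_def b_def beta_def using q1 by (simp add: field_simps)
    moreover have "\<rho> < 1 / 2" unfolding \<rho>_def using q by (simp add: field_simps)
    ultimately show ?thesis by (simp add: distrib_left)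
  qed
  define U where "U N = (1 + b) / (\<rho> * (1 + b)) * ((\<rho> * (1 + b)) ^ N * exp (real N * ((1 / q) * \<kappa> ^ N)))
                     + (1 / c) * r ^ N" for N :: nat
  have qj: "q ^ j \<le> \<kappa> ^ N" if "\<delta> * real N \<le> real j" for j N :: nat
  proof -
    have "q ^ j = q powr real j" using q by (simp add: powr_realpow)
    also have "\<dots> \<le> q powr (\<delta> * real N)" using that q by (intro powr_mono') auto
    also have "\<dots> = \<kappa> ^ N" unfolding \<kappa>_def using q by (simp add: powr_realpow[symmetric] powr_powr)
    finally show ?thesis .
  qed
  have W0: "0 \<le> Wf q N q" for N
    unfolding Wf_def using q b0 by (intro sum_nonneg mult_nonneg_nonneg zero_le_power divide_nonneg_nonneg)
      (auto simp: b_def)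
  have WU: "Wf q N q \<le> U N" if N: "1 \<le> N" for N
  proof -
    define T where "T j = (if j = 0 then 0 else real (N choose j) * b ^ j * ((q + q ^ j) / (1 + q)) ^ (N - 1))" for j
    define A where "A = ((q + \<kappa> ^ N) / (1 + q)) ^ (N - 1)"
    define B where "B = c ^ (N - 1)"
    have A0: "0 \<le> A" unfolding A_def using q \<kappa> by simp
    have B0: "0 \<le> B" unfolding B_def using c by simp
    have "Wf q N q = (\<Sum>j\<le>N. T j)"
    proof -
      have "{..N} = insert 0 {1..N}" by auto
      then have "(\<Sum>j\<le>N. T j) = (\<Sum>j\<in>{1..N}. T j)" by (simp add: T_def)
      then show ?thesis unfolding Wf_def T_def b_def by simp
    qed
    also have "\<dots> \<le> A * (1 + b) ^ N + B * (1 + b * z) ^ N / (z powr \<delta>) ^ N"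
    proof (rule split_sum)
      fix j assume j: "j \<le> N" "\<delta> * real N \<le> real j"
      show "T j \<le> real (N choose j) * b ^ j * A"
      proof (cases "j = 0")
        case False
        have "((q + q ^ j) / (1 + q)) ^ (N - 1) \<le> A"
          unfolding A_def using qj[OF j(2)] q by (intro power_mono divide_right_mono) auto
        then show ?thesis using False b0 unfolding T_def by (simp add: mult_left_mono)
      qed (use A0 b0 in \<open>simp add: T_def\<close>)
    next
      fix j assume j: "j \<le> N" "real j < \<delta> * real N"
      show "T j \<le> real (N choose j) * b ^ j * B"
      proof (cases "j = 0")
        case False
        have "q ^ j \<le> q" using q False power_decreasing[of 1 j q] by auto
        then have "((q + q ^ j) / (1 + q)) ^ (N - 1) \<le> B"
          unfolding B_def c_def using q by (intro power_mono divide_right_mono) auto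
        then show ?thesis using False b0 unfolding T_def by (simp add: mult_left_mono)
      qed (use B0 b0 in \<open>simp add: T_def\<close>)
    qed (use zd b0 A0 B0 in auto)
    also have "A * (1 + b) ^ N \<le> (1 + b) / (\<rho> * (1 + b)) * ((\<rho> * (1 + b)) ^ N * exp (real N * ((1 / q) * \<kappa> ^ N)))"
    proof -
      have e1: "1 + (1 / q) * \<kappa> ^ N = (q + \<kappa> ^ N) / q" using q by (simp add: add_divide_distrib)
      have e: "(q + \<kappa> ^ N) / (1 + q) = \<rho> * (1 + (1 / q) * \<kappa> ^ N)" unfolding \<rho>_def e1 using q by simp
      have "A = \<rho> ^ (N - 1) * (1 + (1 / q) * \<kappa> ^ N) ^ (N - 1)" unfolding A_def e by (simp add: power_mult_distrib)
      also have "\<dots> \<le> \<rho> ^ (N - 1) * exp (real (N - 1) * ((1 / q) * \<kappa> ^ N))"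
        using \<rho>0 q \<kappa> by (intro mult_left_mono pow_le_exp) auto
      also have "\<dots> \<le> \<rho> ^ (N - 1) * exp (real N * ((1 / q) * \<kappa> ^ N))"
      proof -
        have "real (N - 1) * ((1 / q) * \<kappa> ^ N) \<le> real N * ((1 / q) * \<kappa> ^ N)"
          using q \<kappa> by (intro mult_right_mono) auto
        then show ?thesis using \<rho>0 by (intro mult_left_mono) auto
      qed
      finally have "A * (1 + b) ^ N \<le> \<rho> ^ (N - 1) * exp (real N * ((1 / q) * \<kappa> ^ N)) * (1 + b) ^ N"
        using b0 by (intro mult_right_mono) auto
      also have "\<dots> = (1 + b) / (\<rho> * (1 + b)) * ((\<rho> * (1 + b)) ^ N * exp (real N * ((1 / q) * \<kappa> ^ N)))"
      proof -
        have p: "\<rho> ^ (N - 1) = \<rho> ^ N / \<rho>" using pow_pred[of \<rho> N] \<rho>0 N by simp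
        have p2: "(1 + b) / (\<rho> * (1 + b)) = 1 / \<rho>" using b0 by simp
        show ?thesis unfolding p p2 power_mult_distrib by simp
      qed
      finally show ?thesis .
    qed
    also have "B * (1 + b * z) ^ N / (z powr \<delta>) ^ N = (1 / c) * r ^ N"
    proof -
      have p: "c ^ (N - 1) = c ^ N / c" using pow_pred[of c N] c N by simp
      show ?thesis unfolding B_def r_def \<zeta>_def p power_divide power_mult_distrib by simp
    qed
    finally show ?thesis unfolding U_def by simp
  qed
  have "U \<longlonglongrightarrow> (1 + b) / (\<rho> * (1 + b)) * (0 * 1) + (1 / c) * 0"
    unfolding U_def
    by (intro tendsto_add tendsto_mult tendsto_const lim_exp_n_pow LIMSEQ_power_zero) (use \<kappa> r \<rho>b \<rho>0 b0 in auto)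
  then have "U \<longlonglongrightarrow> 0" by simp
  then show ?thesis
    by (intro tendsto_sandwich[of "\<lambda>_. 0" "\<lambda>N. Wf q N q" _ U])
       (auto simp: W0 eventually_sequentially intro!: exI[of _ 1] WU)
qed

lemma lower_N:
  fixes q :: real and \<Phi> :: "nat \<Rightarrow> real"
  assumes q: "0 < q" "q < 1" and N: "1 \<le> N"
    and H1: "\<And>t. q ^ (N * t) \<le> \<Phi> t"
    and H3: "(\<Sum>t\<le>N. real (N choose t) * (1 - q ^ N) ^ t * q ^ (N * (N - t)) * \<Phi> t) \<le> 2 * \<Phi> N"
  shows "((1 - q ^ N / 2) ^ N - (1 / 2) ^ N) / (1 + real N * q ^ N) \<le> \<Phi> N / (q ^ (N * N) * 2 ^ N)"
proof -
  define a where "a = 1 - q ^ N"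
  have "q ^ N \<le> q ^ 1" using power_decreasing[of 1 N q] q N by auto
  then have qN: "0 < q ^ N" "q ^ N < 1" using q by auto
  have a01: "0 \<le> a" "a \<le> 1" unfolding a_def using qN by auto
  have qp: "0 < q ^ n" for n using q by simp
  have "(\<Sum>t\<le>N. real (N choose t) * a ^ t * q ^ (N * (N - t)) * \<Phi> t)
      = (\<Sum>t<N. real (N choose t) * a ^ t * q ^ (N * (N - t)) * \<Phi> t) + a ^ N * \<Phi> N"
    by (simp add: lessThan_Suc_atMost[symmetric])
  moreover have "(\<Sum>t<N. real (N choose t) * a ^ t * q ^ (N * (N - t)) * \<Phi> t)
      \<ge> (\<Sum>t<N. real (N choose t) * a ^ t * q ^ (N * N))"
  proof (rule sum_mono)
    fix t assume "t \<in> {..<N}"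
    then have "N * (N - t) + N * t = N * N" by (simp add: diff_mult_distrib2)
    then have e: "q ^ (N * N) = q ^ (N * (N - t)) * q ^ (N * t)" by (simp add: power_add[symmetric])
    have "q ^ (N * (N - t)) * q ^ (N * t) \<le> q ^ (N * (N - t)) * \<Phi> t"
      using H1[of t] qp by (intro mult_left_mono) (auto intro: less_imp_le)
    then show "real (N choose t) * a ^ t * q ^ (N * N) \<le> real (N choose t) * a ^ t * q ^ (N * (N - t)) * \<Phi> t"
      unfolding e using a01 by (simp add: mult.assoc mult_left_mono)
  qed
  moreover have "(\<Sum>t<N. real (N choose t) * a ^ t * q ^ (N * N)) = q ^ (N * N) * ((1 + a) ^ N - a ^ N)"
  proof -
    have "(1 + a) ^ N = (\<Sum>t\<le>N. real (N choose t) * a ^ t * 1 ^ (N - t))"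
      using binomial_ring[of a 1 N] by (simp add: add.commute)
    also have "\<dots> = (\<Sum>t<N. real (N choose t) * a ^ t) + a ^ N" by (simp add: lessThan_Suc_atMost[symmetric])
    finally show ?thesis by (simp add: sum_distrib_left[symmetric] mult.commute)
  qed
  ultimately have A: "q ^ (N * N) * ((1 + a) ^ N - a ^ N) \<le> (2 - a ^ N) * \<Phi> N"
    using H3 unfolding a_def[symmetric] by (simp add: algebra_simps)
  have bern: "1 - real N * q ^ N \<le> a ^ N"
    using Bernoulli_inequality[of "-(q ^ N)" N] qN unfolding a_def by simp
  have aN: "a ^ N \<le> 1" using a01 by (simp add: power_le_one)
  have Phi0: "0 \<le> \<Phi> N" using H1[of N] qp[of "N * N"] by linarith
  have "q ^ (N * N) * ((1 + a) ^ N - 1) \<le> q ^ (N * N) * ((1 + a) ^ N - a ^ N)"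
    using aN qp[of "N * N"] by (intro mult_left_mono) auto
  also have "\<dots> \<le> (2 - a ^ N) * \<Phi> N" by (rule A)
  also have "\<dots> \<le> (1 + real N * q ^ N) * \<Phi> N" using bern Phi0 by (intro mult_right_mono) auto
  finally have B: "q ^ (N * N) * ((1 + a) ^ N - 1) \<le> (1 + real N * q ^ N) * \<Phi> N" .
  have e2: "(1 + a) ^ N = 2 ^ N * (1 - q ^ N / 2) ^ N"
    unfolding a_def power_mult_distrib[symmetric] by (simp add: algebra_simps)
  have pos: "0 < 1 + real N * q ^ N" using qp[of N] by (simp add: add_pos_nonneg)
  have pos2: "0 < q ^ (N * N) * 2 ^ N" using qp[of "N * N"] by simp
  have "((1 - q ^ N / 2) ^ N - (1 / 2) ^ N) = ((1 + a) ^ N - 1) / 2 ^ N"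
    unfolding e2 by (simp add: field_simps power_divide)
  also have "\<dots> = q ^ (N * N) * ((1 + a) ^ N - 1) / (q ^ (N * N) * 2 ^ N)"
    using qp[of "N * N"] q by simp
  also have "\<dots> \<le> (1 + real N * q ^ N) * \<Phi> N / (q ^ (N * N) * 2 ^ N)"
    using B pos2 by (intro divide_right_mono) auto
  finally have "((1 - q ^ N / 2) ^ N - (1 / 2) ^ N) \<le> (1 + real N * q ^ N) * (\<Phi> N / (q ^ (N * N) * 2 ^ N))"
    by simp
  then show ?thesis using pos by (simp add: divide_le_eq mult.commute)
qed

lemma final_analysis:
  fixes q :: real and F :: "nat \<Rightarrow> nat \<Rightarrow> real"
  assumes q: "0 < q" "q < 1"
    and H0: "\<And>N. 1 \<le> N \<Longrightarrow> F N 0 = 1"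
    and H1: "\<And>N t. 1 \<le> N \<Longrightarrow> q ^ (N * t) \<le> F N t"
    and H2: "\<And>N s. 1 \<le> N \<Longrightarrow> 1 \<le> s \<Longrightarrow> s \<le> N \<Longrightarrow>
        F N s + (1 - q ^ s) * F N N \<le> (\<Sum>t\<le>N. real (N choose t) * (1 - q ^ s) ^ t * q ^ (s * (N - t)) * F N t)"
    and H3: "\<And>N. 1 \<le> N \<Longrightarrow>
        (\<Sum>t\<le>N. real (N choose t) * (1 - q ^ N) ^ t * q ^ (N * (N - t)) * F N t) \<le> 2 * F N N"
  shows "(\<lambda>N. F N N / (q ^ (N * N) * 2 ^ N)) \<longlonglongrightarrow> 1"
proof -
  define \<sigma> where "\<sigma> N = (\<Sum>t\<in>{1..N-1}. real (N choose t) * ((1 + beta q * q ^ (N - t)) ^ N - 1)) / 2 ^ N" for N :: nat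
  define low where "low N = ((1 - q ^ N / 2) ^ N - (1 / 2) ^ N) / (1 + real N * q ^ N)" for N :: nat
  define up where "up N = (1 + \<sigma> N) / (1 - q ^ N - \<sigma> N)" for N :: nat
  have \<sigma>lim: "\<sigma> \<longlonglongrightarrow> 0" unfolding \<sigma>_def by (rule lim_sigma[OF q])
  have qlim: "(\<lambda>N. q ^ N) \<longlonglongrightarrow> 0" using q by (intro LIMSEQ_power_zero) auto
  have nqlim: "(\<lambda>N. real N * q ^ N) \<longlonglongrightarrow> 0" using q by (intro lim_n_pow) auto
  have uplim: "up \<longlonglongrightarrow> 1"
  proof -
    have "up \<longlonglongrightarrow> (1 + 0) / (1 - 0 - 0)" unfolding up_def
      by (intro tendsto_divide tendsto_add tendsto_diff tendsto_const \<sigma>lim qlim) auto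
    then show ?thesis by simp
  qed
  have powlim: "(\<lambda>N. (1 - q ^ N / 2) ^ N) \<longlonglongrightarrow> 1"
  proof (rule tendsto_sandwich[of "\<lambda>N. 1 - real N * q ^ N / 2" _ _ "\<lambda>_. 1"])
    show "\<forall>\<^sub>F N in sequentially. 1 - real N * q ^ N / 2 \<le> (1 - q ^ N / 2) ^ N"
    proof (intro always_eventually allI)
      fix N :: nat
      have "q ^ N \<le> 1" using q by (simp add: power_le_one)
      then have "1 + real N * (- (q ^ N / 2)) \<le> (1 + - (q ^ N / 2)) ^ N"
        by (intro Bernoulli_inequality) auto
      then show "1 - real N * q ^ N / 2 \<le> (1 - q ^ N / 2) ^ N" by simp
    qed
    show "\<forall>\<^sub>F N in sequentially. (1 - q ^ N / 2) ^ N \<le> 1"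
    proof (intro always_eventually allI)
      fix N :: nat
      have "q ^ N \<le> 1" using q by (simp add: power_le_one)
      then show "(1 - q ^ N / 2) ^ N \<le> 1" using q by (intro power_le_one) auto
    qed
    have "(\<lambda>N. 1 - real N * q ^ N / 2) \<longlonglongrightarrow> 1 - 0 / 2"
      by (intro tendsto_diff tendsto_divide tendsto_const nqlim) auto
    then show "(\<lambda>N. 1 - real N * q ^ N / 2) \<longlonglongrightarrow> 1" by simp
  qed auto
  have lowlim: "low \<longlonglongrightarrow> 1"
  proof -
    have "low \<longlonglongrightarrow> (1 - 0) / (1 + 0)" unfolding low_def
      by (intro tendsto_divide tendsto_add tendsto_diff tendsto_const powlim nqlim LIMSEQ_power_zero) auto
    then show ?thesis by simp
  qed
  have b1: "1 < beta q" using beta_ge[OF q] .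
  define c where "c = 2 * q / (1 + q)"
  have c: "0 < c" "c < 1" unfolding c_def using q by (auto simp: field_simps)
  have ev1: "\<forall>\<^sub>F N in sequentially. Wf q N q < (beta q - 1) / 2"
    using lim_W[OF q] b1 by (intro order_tendstoD(2)) auto
  have ev2: "\<forall>\<^sub>F N in sequentially. c ^ N < c * ((beta q - 1) / 4)"
  proof (rule order_tendstoD(2))
    show "(\<lambda>N. c ^ N) \<longlonglongrightarrow> 0" using c by (intro LIMSEQ_power_zero) auto
    show "0 < c * ((beta q - 1) / 4)" using c b1 by simp
  qed
  have ev3: "\<forall>\<^sub>F N in sequentially. 0 < 1 - q ^ N - \<sigma> N"
  proof -
    have "(\<lambda>N. 1 - q ^ N - \<sigma> N) \<longlonglongrightarrow> 1 - 0 - 0" by (intro tendsto_diff tendsto_const qlim \<sigma>lim)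
    then show ?thesis by (intro order_tendstoD(1)) auto
  qed
  have ev4: "\<forall>\<^sub>F N in sequentially. 1 \<le> N" unfolding eventually_sequentially by (rule exI[of _ 1]) simp
  have lowb: "\<forall>\<^sub>F N in sequentially. low N \<le> F N N / (q ^ (N * N) * 2 ^ N)"
    using ev4 by eventually_elim (unfold low_def, rule lower_N[OF q _ H1 H3])
  have upb: "\<forall>\<^sub>F N in sequentially. F N N / (q ^ (N * N) * 2 ^ N) \<le> up N"
    using ev1 ev2 ev3 ev4
  proof eventually_elim
    case (elim N)
    have C2: "(2 * q / (1 + q)) ^ (N - 1) \<le> (beta q - 1) / 4"
    proof -
      have "c ^ (N - 1) = c ^ N / c" using pow_pred[of c N] c elim(4) by simp
      also have "\<dots> \<le> (beta q - 1) / 4" using elim(2) c by (simp add: divide_le_eq mult.commute)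
      finally show ?thesis unfolding c_def .
    qed
    have "F N N / (q ^ (N * N) * 2 ^ N) * (1 - q ^ N - \<sigma> N) \<le> 1 + \<sigma> N"
      unfolding \<sigma>_def
      by (rule upper_N[OF q elim(4) H0 H1 H2 _ C2]) (use elim in \<open>auto simp: \<sigma>_def\<close>)
    then show ?case unfolding up_def using elim(3) by (simp add: le_divide_eq)
  qed
  show ?thesis by (rule tendsto_sandwich[OF lowb upb lowlim uplim])
qed

theorem proposition6p2:
  fixes k :: int and p :: "int pmf" and \<nu> :: "nat \<Rightarrow> (int \<Rightarrow> nat) pmf"
  assumes supp: "set_pmf p \<subseteq> {l. l \<le> k}"
    and pk_pos: "0 < pmf p k" and pk_lt1: "pmf p k < 1"
    and inv: "\<And>N. 1 \<le> N \<Longrightarrow> invariant_Z p k N (\<nu> N)"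
  shows "(\<lambda>N. measure_pmf.prob (\<nu> N) {m. phi k m \<le> k - 1}
            / ((1 - pmf p k) ^ (N ^ 2) * 2 ^ N)) \<longlonglongrightarrow> 1"
proof -
  define q where "q = 1 - pmf p k"
  have q: "0 < q" "q < 1" using pk_pos pk_lt1 unfolding q_def by auto
  define FF where "FF N t = measure_pmf.expectation (\<nu> N) (\<lambda>m. (q ^ m (phi k m)) ^ t)" for N t :: nat
  note SS = stationary_system[OF supp pk_pos pk_lt1 _ inv, folded q_def]
  have lim: "(\<lambda>N. FF N N / (q ^ (N * N) * 2 ^ N)) \<longlonglongrightarrow> 1"
  proof (rule final_analysis[of q FF, OF q])
    show "\<And>N. 1 \<le> N \<Longrightarrow> FF N 0 = 1" unfolding FF_def using SS(1) by simp
    show "\<And>N t. 1 \<le> N \<Longrightarrow> q ^ (N * t) \<le> FF N t" unfolding FF_def using SS(2) by simp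
    show "\<And>N s. 1 \<le> N \<Longrightarrow> 1 \<le> s \<Longrightarrow> s \<le> N \<Longrightarrow>
        FF N s + (1 - q ^ s) * FF N N \<le> (\<Sum>t\<le>N. real (N choose t) * (1 - q ^ s) ^ t * q ^ (s * (N - t)) * FF N t)"
      unfolding FF_def using SS(4) by simp
    show "\<And>N. 1 \<le> N \<Longrightarrow> (\<Sum>t\<le>N. real (N choose t) * (1 - q ^ N) ^ t * q ^ (N * (N - t)) * FF N t) \<le> 2 * FF N N"
      unfolding FF_def using SS(5) by simp
  qed
  have ev: "\<forall>\<^sub>F N in sequentially. FF N N / (q ^ (N * N) * 2 ^ N)
      = measure_pmf.prob (\<nu> N) {m. phi k m \<le> k - 1} / ((1 - pmf p k) ^ (N ^ 2) * 2 ^ N)"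
    unfolding eventually_sequentially
  proof (intro exI[of _ 1] allI impI)
    fix N :: nat assume N: "1 \<le> N"
    show "FF N N / (q ^ (N * N) * 2 ^ N)
      = measure_pmf.prob (\<nu> N) {m. phi k m \<le> k - 1} / ((1 - pmf p k) ^ (N ^ 2) * 2 ^ N)"
      unfolding FF_def SS(3)[OF N N] q_def by (simp add: power2_eq_square)
  qed
  show ?thesis using tendsto_cong[OF ev] lim by simp
qed

end
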